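(* Let $H^L$ and $\blacktriangleright$ be as in the context, and for $\alpha=1,\dots,n$ let $\hat y_\alpha:=\hat x_\beta(\mathcal O^{-1})^\beta_\alpha\in H^L$. Then for all $\hat f,\hat g\in U(\mathfrak g^L)$: (1) $\hat x_\alpha\hat f=(\mathcal O^\beta_\alpha\blacktriangleright\hat f)\,\hat x_\beta$; (2) $\mathcal O^\gamma_\alpha\blacktriangleright(\hat g\hat f)=(\mathcal O^\beta_\alpha\blacktriangleright\hat g)(\mathcal O^\gamma_\beta\blacktriangleright\hat f)$; (3) $(\mathcal O^{-1})^\gamma_\alpha\blacktriangleright(\hat g\hat f)=((\mathcal O^{-1})^\gamma_\beta\blacktriangleright\hat g)((\mathcal O^{-1})^\beta_\alpha\blacktriangleright\hat f)$; (4) $\hat y_\alpha\blacktriangleright\hat f=\hat f\hat x_\alpha$; (5) $(\hat x_\alpha\blacktriangleright\hat f)\hat g=(\mathcal O^\beta_\alpha\blacktriangleright\hat f)(\hat x_\beta\blacktriangleright\hat g)$.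
   Context: Let $k$ be a field of characteristic zero and $\mathfrak g$ a Lie algebra over $k$ of finite dimension $n$ with basis $\hat x_1,\dots,\hat x_n$ and $[\hat x_\mu,\hat x_\nu]=C^\lambda_{\mu\nu}\hat x_\lambda$. Summation over repeated indices is understood. Write $U(\mathfrak g^L):=U(\mathfrak g)$, a cocommutative Hopf algebra with $\hat x_\mu$ primitive; Sweedler notation $\Delta(u)=\sum u_{(1)}\otimes u_{(2)}$, counit $\epsilon$. Let $\hat S(\mathfrak g^* ):=k[[\partial^1,\dots,\partial^n]]$ (commutative formal power series) and $\epsilon_S:\hat S(\mathfrak g^* )\to k$ the constant-term map. Let $\mathcal C$ be the $n\times n$ matrix with entries $\mathcal C^\alpha_\beta:=C^\alpha_{\beta\gamma}\partial^\gamma$, $\phi:=\frac{-\mathcal C}{e^{-\mathcal C}-1}=\sum_{N\ge0}\frac{(-1)^NB_N}{N!}\mathcal C^N$ ($B_N$ Bernoulli numbers), and $\mathcal O:=e^{\mathcal C}$, with inverse $\mathcal O^{-1}=e^{-\mathcal C}$ (entries in $\hat S(\mathfrak g^* )$). It is known (and assumed) that there is a unique right Hopf action $\triangleleft$ of $U(\mathfrak g^L)$ on $\hat S(\mathfrak g^* )$ (i.e. $(a\triangleleft u)\triangleleft v=a\triangleleft(uv)$, $(ab)\triangleleft u=\sum(a\triangleleft u_{(1)})(b\triangleleft u_{(2)})$, $1\triangleleft u=\epsilon(u)1$) such that $a\mapsto a\triangleleft\hat x_\alpha$ is the continuous derivation sending $\partial^\beta\mapsto\phi^\beta_\alpha$.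 $H^L=U(\mathfrak g^L)\sharp\hat S(\mathfrak g^* )$ is the vector space $U(\mathfrak g^L)\otimes\hat S(\mathfrak g^* )$ with product $(u\sharp a)(u'\sharp a')=\sum uu'_{(1)}\sharp(a\triangleleft u'_{(2)})a'$, where $u\equiv u\sharp1$, $a\equiv1\sharp a$ (so $[\partial^\mu,\hat x_\nu]=\phi^\mu_\nu$). The (left) black action $\blacktriangleright:H^L\otimes U(\mathfrak g^L)\to U(\mathfrak g^L)$ is $h\blacktriangleright\hat f:=(\mathrm{id}\otimes\epsilon_S)(h\hat f)$, where the product $h\hat f$ is taken in $H^L$ and viewed as an element of $U(\mathfrak g^L)\otimes\hat S(\mathfrak g^* )$; it is the action of $H^L$ on $U(\mathfrak g^L)$ with $\partial^\mu\blacktriangleright1=0$ and $\hat f\blacktriangleright 1=\hat f$. *)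

theory Defs
  imports Complex_Main
begin

text \<open>The index set {1..n} of the basis of the Lie algebra is modelled by a finite,
linearly ordered type 'n (so n = CARD('n)).  An element of the completed symmetric
algebra k[[\<partial>^1,...,\<partial>^n]] is its coefficient function on monomials (exponent
vectors 'n => nat).\<close>

type_synonym ('n, 'k) ps = "('n \<Rightarrow> nat) \<Rightarrow> 'k"

definition unitm :: "'n \<Rightarrow> ('n \<Rightarrow> nat)" where
  "unitm g = (\<lambda>i. if i = g then 1 else 0)"

definition ps_const :: "'k::field \<Rightarrow> ('n, 'k) ps" where
  "ps_const c = (\<lambda>m. if m = (\<lambda>_. 0) then c else 0)"

definition ps_var :: "'n \<Rightarrow> ('n, 'k::field) ps" where
  "ps_var g = (\<lambda>m. if m = unitm g then 1 else 0)"

definition ps_add :: "('n, 'k::field) ps \<Rightarrow> ('n, 'k) ps \<Rightarrow> ('n, 'k) ps" where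
  "ps_add f g = (\<lambda>m. f m + g m)"

definition ps_smult :: "'k::field \<Rightarrow> ('n, 'k) ps \<Rightarrow> ('n, 'k) ps" where
  "ps_smult c f = (\<lambda>m. c * f m)"

definition ps_setsum :: "'a set \<Rightarrow> ('a \<Rightarrow> ('n, 'k::field) ps) \<Rightarrow> ('n, 'k) ps" where
  "ps_setsum S F = (\<lambda>m. \<Sum>i\<in>S. F i m)"

text \<open>Cauchy product (the set of divisors p \<le> m of a monomial is finite as 'n is finite).\<close>
definition ps_mul :: "('n::finite, 'k::field) ps \<Rightarrow> ('n, 'k) ps \<Rightarrow> ('n, 'k) ps" where
  "ps_mul f g = (\<lambda>m. \<Sum>p\<in>{p. p \<le> m}. f p * g (\<lambda>i. m i - p i))"

definition ps_deriv :: "'n \<Rightarrow> ('n, 'k::field) ps \<Rightarrow> ('n, 'k) ps" where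
  "ps_deriv g f = (\<lambda>m. of_nat (Suc (m g)) * f (m(g := Suc (m g))))"

definition eps_S :: "('n, 'k) ps \<Rightarrow> 'k" where
  "eps_S f = f (\<lambda>_. 0)"

definition deg :: "('n::finite \<Rightarrow> nat) \<Rightarrow> nat" where
  "deg m = (\<Sum>i\<in>UNIV. m i)"

text \<open>Formal (coefficientwise) sum of a sequence of power series F N of order \<ge> N:
only the terms N \<le> deg m contribute to the coefficient of the monomial m.\<close>
definition fsum :: "(nat \<Rightarrow> ('n::finite, 'k::field) ps) \<Rightarrow> ('n, 'k) ps" where
  "fsum F = (\<lambda>m. \<Sum>N\<le>deg m. F N m)"

section \<open>Bernoulli numbers (B_1 = -1/2)\<close>

primrec bern_list :: "nat \<Rightarrow> rat list" where
  "bern_list 0 = [1]"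
| "bern_list (Suc N) = bern_list N @
     [ - (\<Sum>k\<le>N. of_nat (Suc (Suc N) choose k) * (bern_list N ! k)) / of_nat (Suc (Suc N))]"

definition bern :: "nat \<Rightarrow> rat" where
  "bern N = bern_list N ! N"

text \<open>Structure constants: C l m n = C^l_{mn}, i.e. [x_m, x_n] = \<Sum>_l C^l_{mn} x_l.\<close>

definition Cmat :: "('n::finite \<Rightarrow> 'n \<Rightarrow> 'n \<Rightarrow> 'k::field) \<Rightarrow> 'n \<Rightarrow> 'n \<Rightarrow> ('n, 'k) ps" where
  "Cmat C a b = ps_setsum UNIV (\<lambda>g. ps_smult (C a b g) (ps_var g))"

primrec cpow :: "('n::finite \<Rightarrow> 'n \<Rightarrow> 'n \<Rightarrow> 'k::field) \<Rightarrow> nat \<Rightarrow> 'n \<Rightarrow> 'n \<Rightarrow> ('n, 'k) ps" where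
  "cpow C 0 a b = ps_const (if a = b then 1 else 0)"
| "cpow C (Suc N) a b = ps_setsum UNIV (\<lambda>g. ps_mul (cpow C N a g) (Cmat C g b))"

text \<open>\<O> = e^\<C>, entry (a,b) is \<O>^a_b.\<close>
definition Omat :: "('n::finite \<Rightarrow> 'n \<Rightarrow> 'n \<Rightarrow> 'k::field_char_0) \<Rightarrow> 'n \<Rightarrow> 'n \<Rightarrow> ('n, 'k) ps" where
  "Omat C a b = fsum (\<lambda>N. ps_smult (1 / fact N) (cpow C N a b))"

definition Oinv :: "('n::finite \<Rightarrow> 'n \<Rightarrow> 'n \<Rightarrow> 'k::field_char_0) \<Rightarrow> 'n \<Rightarrow> 'n \<Rightarrow> ('n, 'k) ps" where
  "Oinv C a b = fsum (\<lambda>N. ps_smult ((-1) ^ N / fact N) (cpow C N a b))"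

definition phi :: "('n::finite \<Rightarrow> 'n \<Rightarrow> 'n \<Rightarrow> 'k::field_char_0) \<Rightarrow> 'n \<Rightarrow> 'n \<Rightarrow> ('n, 'k) ps" where
  "phi C a b = fsum (\<lambda>N. ps_smult ((-1) ^ N * of_rat (bern N) / fact N) (cpow C N a b))"

text \<open>a \<triangleleft> x_a: the continuous derivation sending \<partial>^b to \<phi>^b_a.\<close>
definition Dact :: "('n::finite \<Rightarrow> 'n \<Rightarrow> 'n \<Rightarrow> 'k::field_char_0) \<Rightarrow> 'n \<Rightarrow> ('n, 'k) ps \<Rightarrow> ('n, 'k) ps" where
  "Dact C a f = ps_setsum UNIV (\<lambda>b. ps_mul (ps_deriv b f) (phi C b a))"

definition lie_structure :: "('n::finite \<Rightarrow> 'n \<Rightarrow> 'n \<Rightarrow> 'k::field) \<Rightarrow> bool" where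
  "lie_structure C \<longleftrightarrow>
     (\<forall>l m n. C l m n = - C l n m) \<and>
     (\<forall>l m n r. (\<Sum>s\<in>UNIV. C s m n * C l s r + C s n r * C l s m + C s r m * C l s n) = 0)"

definition pbw :: "('n \<Rightarrow> 'u::monoid_mult) \<Rightarrow> 'n list \<Rightarrow> 'u" where
  "pbw x w = prod_list (map x w)"

text \<open>'u with the scalar embedding sc and generators x is (isomorphic to) the universal
enveloping algebra U(g): it is a k-algebra generated by elements x satisfying the
bracket relations, whose ordered (PBW) monomials form a k-basis.\<close>
definition is_Ug :: "('n::{finite,linorder} \<Rightarrow> 'n \<Rightarrow> 'n \<Rightarrow> 'k::field) \<Rightarrow> ('k \<Rightarrow> 'u::ring_1)
     \<Rightarrow> ('n \<Rightarrow> 'u) \<Rightarrow> bool" where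
  "is_Ug C sc x \<longleftrightarrow>
     (\<forall>a b. sc (a + b) = sc a + sc b) \<and> (\<forall>a b. sc (a * b) = sc a * sc b) \<and> sc 1 = 1 \<and>
     (\<forall>c u. sc c * u = u * sc c) \<and>
     (\<forall>m n. x m * x n - x n * x m = (\<Sum>l\<in>UNIV. sc (C l m n) * x l)) \<and>
     (\<forall>W c. finite W \<and> W \<subseteq> {w. sorted w} \<and> (\<Sum>w\<in>W. sc (c w) * pbw x w) = 0
            \<longrightarrow> (\<forall>w\<in>W. c w = 0)) \<and>
     (\<forall>u. \<exists>W c. finite W \<and> W \<subseteq> {w. sorted w} \<and> u = (\<Sum>w\<in>W. sc (c w) * pbw x w))"

text \<open>'h with the algebra maps iU (u \<mapsto> u \<sharp> 1) and jS (a \<mapsto> 1 \<sharp> a) is (isomorphic to)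
the smash product H^L = U(g^L) \<sharp> S^(g*): the map u \<otimes> a \<mapsto> iU u * jS a is a linear
bijection U \<otimes> S^ \<rightarrow> H (expressed with the PBW basis), and the cross relation
(1 \<sharp> a)(x_a \<sharp> 1) = x_a \<sharp> a + 1 \<sharp> (a \<triangleleft> x_a) holds; these determine the product.\<close>
definition is_HL :: "('n::{finite,linorder} \<Rightarrow> 'n \<Rightarrow> 'n \<Rightarrow> 'k::field_char_0) \<Rightarrow> ('k \<Rightarrow> 'u::ring_1)
     \<Rightarrow> ('n \<Rightarrow> 'u) \<Rightarrow> ('u \<Rightarrow> 'h::ring_1) \<Rightarrow> (('n, 'k) ps \<Rightarrow> 'h) \<Rightarrow> bool" where
  "is_HL C sc x iU jS \<longleftrightarrow>
     (\<forall>u v. iU (u + v) = iU u + iU v) \<and> (\<forall>u v. iU (u * v) = iU u * iU v) \<and> iU 1 = 1 \<and>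
     (\<forall>a b. jS (ps_add a b) = jS a + jS b) \<and> (\<forall>a b. jS (ps_mul a b) = jS a * jS b) \<and>
     (\<forall>c. jS (ps_const c) = iU (sc c)) \<and>
     (\<forall>a f. jS f * iU (x a) = iU (x a) * jS f + jS (Dact C a f)) \<and>
     (\<forall>W f. finite W \<and> W \<subseteq> {w. sorted w} \<and> (\<Sum>w\<in>W. iU (pbw x w) * jS (f w)) = 0
            \<longrightarrow> (\<forall>w\<in>W. f w = (\<lambda>_. 0))) \<and>
     (\<forall>h. \<exists>W f. finite W \<and> W \<subseteq> {w. sorted w} \<and> h = (\<Sum>w\<in>W. iU (pbw x w) * jS (f w)))"

text \<open>The black action h \<blacktriangleright> u = (id \<otimes> \<epsilon>_S)(h u).\<close>
definition black :: "('k \<Rightarrow> 'u::ring_1) \<Rightarrow> ('n::linorder \<Rightarrow> 'u) \<Rightarrow> ('u \<Rightarrow> 'h::ring_1)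
     \<Rightarrow> (('n, 'k) ps \<Rightarrow> 'h) \<Rightarrow> 'h \<Rightarrow> 'u \<Rightarrow> 'u" where
  "black sc x iU jS h u = (THE v. \<exists>W f. finite W \<and> W \<subseteq> {w. sorted w} \<and>
       h * iU u = (\<Sum>w\<in>W. iU (pbw x w) * jS (f w)) \<and>
       v = (\<Sum>w\<in>W. sc (eps_S (f w)) * pbw x w))"

end

theory Submission
  imports Defs
begin

lemma nz_sum: "sum f A \<noteq> 0 \<Longrightarrow> \<exists>a\<in>A. f a \<noteq> 0"
  by (rule ccontr) simp

lemma finite_le_mon: "finite {p :: 'n::finite \<Rightarrow> nat. p \<le> m}"
proof -
  let ?B = "{..Max (range m)}"
  have "{p :: 'n \<Rightarrow> nat. p \<le> m} \<subseteq> {f. \<forall>x. (x \<in> UNIV \<longrightarrow> f x \<in> ?B) \<and> (x \<notin> UNIV \<longrightarrow> f x = 0)}"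
  proof
    fix p :: "'n \<Rightarrow> nat" assume "p \<in> {p. p \<le> m}"
    hence "p x \<le> m x" for x by (simp add: le_fun_def)
    moreover have "m x \<le> Max (range m)" for x by (rule Max_ge) auto
    ultimately have "p x \<le> Max (range m)" for x by (metis le_trans)
    thus "p \<in> {f. \<forall>x. (x \<in> UNIV \<longrightarrow> f x \<in> ?B) \<and> (x \<notin> UNIV \<longrightarrow> f x = 0)}"
      by simp
  qed
  moreover have "finite {f. \<forall>x. (x \<in> (UNIV::'n set) \<longrightarrow> f x \<in> ?B) \<and> (x \<notin> UNIV \<longrightarrow> f x = (0::nat))}"
    by (rule finite_set_of_finite_funs) auto
  ultimately show ?thesis by (rule finite_subset)
qed

lemma ps_mul_comm: "ps_mul f g = ps_mul g (f :: ('n::finite,'k::field) ps)"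
proof (rule ext)
  fix m :: "'n \<Rightarrow> nat"
  show "ps_mul f g m = ps_mul g f m"
    unfolding ps_mul_def
    apply (rule sum.reindex_bij_witness[where i="\<lambda>p i. m i - p i" and j="\<lambda>p i. m i - p i"])
    by (auto simp: le_fun_def mult.commute)
qed

lemma ps_mul_assoc: "ps_mul f (ps_mul g h) = ps_mul (ps_mul f g) (h :: ('n::finite,'k::field) ps)"
proof (rule ext)
  fix m :: "'n \<Rightarrow> nat"
  have L: "ps_mul f (ps_mul g h) m = (\<Sum>(p,q)\<in>Sigma {p. p \<le> m} (\<lambda>p. {q. q \<le> (\<lambda>i. m i - p i)}).
            f p * (g q * h (\<lambda>i. m i - p i - q i)))"
    unfolding ps_mul_def
    by (subst sum.Sigma[symmetric]) (auto simp: finite_le_mon sum_distrib_left)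
  have R: "ps_mul (ps_mul f g) h m = (\<Sum>(r,p)\<in>Sigma {r. r \<le> m} (\<lambda>r. {p. p \<le> r}).
            f p * g (\<lambda>i. r i - p i) * h (\<lambda>i. m i - r i))"
    unfolding ps_mul_def
    by (subst sum.Sigma[symmetric]) (auto simp: finite_le_mon sum_distrib_right)
  show "ps_mul f (ps_mul g h) m = ps_mul (ps_mul f g) h m"
    unfolding L R
    apply (rule sum.reindex_bij_witness[where i="\<lambda>(r,p). (p, \<lambda>i. r i - p i)" and j="\<lambda>(p,q). (\<lambda>i. p i + q i, p)"])
    apply (auto simp: le_fun_def mult.assoc diff_diff_add intro: order_trans)
    apply (metis add.commute le_diff_conv2)
    by (meson diff_le_mono)
qed

lemma ps_mul_sum_left: "finite J \<Longrightarrow> ps_mul (\<lambda>m. \<Sum>j\<in>J. X j m) g = (\<lambda>m. \<Sum>j\<in>J. ps_mul (X j) g m)"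
  unfolding ps_mul_def by (auto simp: sum_distrib_right intro!: ext sum.swap)

lemma ps_mul_add_left: "ps_mul (\<lambda>m. a m + b m) g = (\<lambda>m. ps_mul a g m + ps_mul b g m)"
  unfolding ps_mul_def by (auto simp: distrib_right sum.distrib intro!: ext)

lemma ps_mul_diff_left: "ps_mul (\<lambda>m. a m - b m) (g::('n::finite,'k::field) ps) = (\<lambda>m. ps_mul a g m - ps_mul b g m)"
  unfolding ps_mul_def by (auto simp: left_diff_distrib sum_subtractf intro!: ext)

lemma ps_mul_scal_left: "ps_mul (\<lambda>m. k * a m) g = (\<lambda>m. k * ps_mul a g m)"
  unfolding ps_mul_def by (auto simp: sum_distrib_left mult.assoc intro!: ext)

lemma ps_mul_sum_right: "finite J \<Longrightarrow> ps_mul g (\<lambda>m. \<Sum>j\<in>J. X j m) = (\<lambda>m. \<Sum>j\<in>J. ps_mul g (X j) m)"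
  by (subst ps_mul_comm, simp add: ps_mul_sum_left, subst ps_mul_comm, simp)

lemma ps_mul_add_right: "ps_mul g (\<lambda>m. a m + b m) = (\<lambda>m. ps_mul g a m + ps_mul g b m)"
  by (subst ps_mul_comm, simp add: ps_mul_add_left, metis ps_mul_comm)

lemma ps_mul_scal_right: "ps_mul g (\<lambda>m. k * a m) = (\<lambda>m. k * ps_mul g a m)"
  by (subst ps_mul_comm, simp add: ps_mul_scal_left, metis ps_mul_comm)

lemma ps_mul_const: "ps_mul (ps_const c) f = (\<lambda>m. c * f m)"
proof (rule ext)
  fix m :: "'a \<Rightarrow> nat"
  have "ps_mul (ps_const c) f m = (\<Sum>p\<in>{p. p \<le> m}. if p = (\<lambda>_. 0) then c * f (\<lambda>i. m i - p i) else 0)"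
    unfolding ps_mul_def ps_const_def by (intro sum.cong) auto
  also have "\<dots> = c * f m" by (subst sum.delta[OF finite_le_mon]) (auto simp: le_fun_def)
  finally show "ps_mul (ps_const c) f m = c * f m" .
qed

lemma unitm_le: "unitm c \<le> m \<longleftrightarrow> 1 \<le> m c"
  by (auto simp: unitm_def le_fun_def)

lemma ps_mul_var: "ps_mul (ps_var c) f m = (if 1 \<le> m c then f (m(c := m c - 1)) else 0)"
proof -
  have "ps_mul (ps_var c) f m = (\<Sum>p\<in>{p. p \<le> m}. if p = unitm c then f (\<lambda>i. m i - p i) else 0)"
    unfolding ps_mul_def ps_var_def by (intro sum.cong) auto
  also have "\<dots> = (if 1 \<le> m c then f (\<lambda>i. m i - unitm c i) else 0)"
    by (subst sum.delta) (auto simp: finite_le_mon unitm_le)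
  also have "(\<lambda>i. m i - unitm c i) = m(c := m c - 1)" by (auto simp: unitm_def)
  finally show ?thesis .
qed

lemma deg_diff: "p \<le> m \<Longrightarrow> deg (\<lambda>i. m i - p i) = deg m - deg p"
proof -
  assume "p \<le> m"
  hence "deg (\<lambda>i. m i - p i) + deg p = deg m"
    unfolding deg_def by (simp add: sum.distrib[symmetric] le_fun_def)
  thus ?thesis by linarith
qed

lemma deg_le: "p \<le> m \<Longrightarrow> deg p \<le> deg m"
  unfolding deg_def by (rule sum_mono) (auto simp: le_fun_def)

lemma deg_le_eq: assumes "p \<le> m" "deg p = deg m" shows "p = m"
proof (rule ccontr)
  assume "p \<noteq> m"
  then obtain i where i: "p i \<noteq> m i" by auto
  with assms have "p i < m i" by (auto simp: le_fun_def order.order_iff_strict)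
  hence "deg p < deg m" unfolding deg_def
    using assms(1) by (intro sum_strict_mono_ex1) (auto simp: le_fun_def)
  with assms show False by simp
qed

lemma deg_zero[simp]: "deg (\<lambda>_. 0) = 0" by (simp add: deg_def)
lemma deg_zero_iff: "deg m = 0 \<longleftrightarrow> m = (\<lambda>_. 0)"
  by (auto simp: deg_def)

lemma deg_upd: "deg (m(c := v)) = deg m - m c + v"
proof -
  have "deg (m(c:=v)) + m c = deg m + v"
    unfolding deg_def
    by (simp add: sum.remove[of UNIV c] add.assoc add.commute add.left_commute)
  moreover have "m c \<le> deg m" unfolding deg_def by (rule member_le_sum) auto
  ultimately show ?thesis by linarith
qed

lemma deg_unitm[simp]: "deg (unitm c) = 1"
  unfolding deg_def unitm_def by simp

definition homog :: "nat \<Rightarrow> ('n::finite,'k::field) ps \<Rightarrow> bool" where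
  "homog N f \<longleftrightarrow> (\<forall>m. f m \<noteq> 0 \<longrightarrow> deg m = N)"

lemma homogD: "homog N f \<Longrightarrow> deg m \<noteq> N \<Longrightarrow> f m = 0"
  unfolding homog_def by auto

lemma homog_mul: assumes "homog N f" "homog M g" shows "homog (N+M) (ps_mul f g)"
  unfolding homog_def
proof (intro allI impI)
  fix m assume "ps_mul f g m \<noteq> 0"
  then obtain p where p: "p \<le> m" "f p * g (\<lambda>i. m i - p i) \<noteq> 0"
    unfolding ps_mul_def by (auto dest: nz_sum)
  hence "deg p = N" "deg (\<lambda>i. m i - p i) = M" using assms unfolding homog_def by auto
  with p(1) deg_diff[OF p(1)] deg_le[OF p(1)] show "deg m = N + M" by simp
qed

lemma homog_sum: assumes "\<And>j. j\<in>J \<Longrightarrow> homog N (X j)" shows "homog N (\<lambda>m. \<Sum>j\<in>J. X j m)"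
  unfolding homog_def
proof (intro allI impI)
  fix m assume "(\<Sum>j\<in>J. X j m) \<noteq> 0"
  then obtain j where "j \<in> J" "X j m \<noteq> 0" by (auto dest: nz_sum)
  with assms show "deg m = N" unfolding homog_def by blast
qed

lemma homog_Cmat: "homog 1 (Cmat C a b)"
  unfolding homog_def
proof (intro allI impI)
  fix m assume "Cmat C a b m \<noteq> 0"
  hence "(\<Sum>g\<in>UNIV. C a b g * (if m = unitm g then 1 else 0)) \<noteq> 0"
    by (simp add: Cmat_def ps_setsum_def ps_smult_def ps_var_def)
  then obtain g where "C a b g * (if m = unitm g then 1 else 0) \<noteq> 0"
    by (auto dest: nz_sum)
  hence "m = unitm g" by (simp split: if_splits)
  thus "deg m = 1" by simp
qed

lemma homog_cpow: "homog N (cpow C N a b)"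
proof (induction N arbitrary: b)
  case 0 then show ?case by (auto simp: homog_def ps_const_def)
next
  case (Suc N)
  have "homog (Suc N) (\<lambda>m. \<Sum>g\<in>UNIV. ps_mul (cpow C N a g) (Cmat C g b) m)"
    by (rule homog_sum) (use homog_mul[OF Suc homog_Cmat] in simp)
  then show ?case unfolding cpow.simps ps_setsum_def .
qed

lemma fsum_homog: assumes h: "\<And>N. homog N (F N)" shows "fsum F m = F (deg m) m"
proof -
  have "fsum F m = (\<Sum>N\<le>deg m. if deg m = N then F N m else 0)"
    unfolding fsum_def by (intro sum.cong refl) (auto intro: homogD[OF h])
  also have "\<dots> = F (deg m) m" by (subst sum.delta') auto
  finally show ?thesis .
qed

lemma homog_smult: "homog N f \<Longrightarrow> homog N (ps_smult c f)"
  unfolding homog_def ps_smult_def by auto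

lemma Omat_coef: "Omat C a b m = cpow C (deg m) a b m / fact (deg m)"
  unfolding Omat_def
  apply (subst fsum_homog)
   apply (rule homog_smult, rule homog_cpow)
  by (simp add: ps_smult_def)

lemma Oinv_coef: "Oinv C a b m = (-1)^deg m * cpow C (deg m) a b m / fact (deg m)"
  unfolding Oinv_def
  apply (subst fsum_homog)
   apply (rule homog_smult, rule homog_cpow)
  by (simp add: ps_smult_def)

lemma phi_coef: "phi C a b m = (-1)^deg m * of_rat (bern (deg m)) * cpow C (deg m) a b m / fact (deg m)"
  unfolding phi_def
  apply (subst fsum_homog)
   apply (rule homog_smult, rule homog_cpow)
  by (simp add: ps_smult_def)

lemma Dact_eq: "Dact C b f = (\<lambda>m. \<Sum>e\<in>UNIV. ps_mul (ps_deriv e f) (phi C e b) m)"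
  unfolding Dact_def ps_setsum_def ..

lemma ps_deriv_add: "ps_deriv e (\<lambda>m. X m + Y m) = (\<lambda>m. ps_deriv e X m + ps_deriv e Y m)"
  unfolding ps_deriv_def by (auto simp: distrib_left)
lemma ps_deriv_diff: "ps_deriv e (\<lambda>m. X m - Y m) = (\<lambda>m. ps_deriv e X m - ps_deriv e Y m)"
  unfolding ps_deriv_def by (auto simp: right_diff_distrib)
lemma ps_deriv_scal: "ps_deriv e (\<lambda>m. k * X m) = (\<lambda>m. k * ps_deriv e X m)"
  unfolding ps_deriv_def by (auto simp: mult.left_commute)
lemma ps_deriv_sum: "ps_deriv e (\<lambda>m. \<Sum>j\<in>J. X j m) = (\<lambda>m. \<Sum>j\<in>J. ps_deriv e (X j) m)"
  unfolding ps_deriv_def by (auto simp: sum_distrib_left)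

lemma Dact_add: "Dact C b (\<lambda>m. X m + Y m) = (\<lambda>m. Dact C b X m + Dact C b Y m)"
  unfolding Dact_eq ps_deriv_add ps_mul_add_left by (simp add: sum.distrib)
lemma Dact_diff: "Dact C b (\<lambda>m. X m - Y m) = (\<lambda>m. Dact C b X m - Dact C b Y m)"
  unfolding Dact_eq ps_deriv_diff ps_mul_diff_left by (simp add: sum_subtractf)
lemma Dact_scal: "Dact C b (\<lambda>m. k * X m) = (\<lambda>m. k * Dact C b X m)"
  unfolding Dact_eq ps_deriv_scal ps_mul_scal_left by (simp add: sum_distrib_left)
lemma Dact_sum: "finite J \<Longrightarrow> Dact C b (\<lambda>m. \<Sum>j\<in>J. X j m) = (\<lambda>m. \<Sum>j\<in>J. Dact C b (X j) m)"
  unfolding Dact_eq ps_deriv_sum by (simp add: ps_mul_sum_left sum.swap[of _ UNIV])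

lemma cpow0_zero: "cpow C 0 a b (\<lambda>_. 0) = (if a = b then 1 else 0)"
  by (simp add: ps_const_def)

lemma phi_zero: "phi C e b (\<lambda>_. 0) = (if e = b then 1 else 0)"
  by (simp add: phi_coef bern_def ps_const_def)

lemma Dact_low:
  assumes low: "\<And>m'. deg m' < K \<Longrightarrow> X m' = 0" and dm: "Suc (deg m) = K"
  shows "Dact C b X m = of_nat (Suc (m b)) * X (m(b := Suc (m b)))"
proof -
  have "Dact C b X m = (\<Sum>e\<in>UNIV. \<Sum>p\<in>{p. p \<le> m}. if p = m then ps_deriv e X p * phi C e b (\<lambda>i. m i - p i) else 0)"
    unfolding Dact_eq ps_mul_def
  proof (intro sum.cong refl, goal_cases)
    case (1 e p)
    show ?case
    proof (cases "p = m")
      case False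
      from 1 have pm: "p \<le> m" by simp
      have "deg p \<noteq> deg m" using deg_le_eq[OF pm] False by blast
      hence "deg p < deg m" using deg_le[OF pm] by linarith
      moreover have "p e \<le> deg p" unfolding deg_def by (rule member_le_sum) auto
      ultimately have "deg (p(e := Suc (p e))) < K" using dm by (simp add: deg_upd)
      hence "ps_deriv e X p = 0" by (simp add: ps_deriv_def low)
      with False show ?thesis by simp
    qed simp
  qed
  also have "\<dots> = (\<Sum>e\<in>UNIV. ps_deriv e X m * phi C e b (\<lambda>_. 0))"
    by (simp only: sum.delta[OF finite_le_mon]) simp
  also have "\<dots> = ps_deriv b X m" by (simp add: phi_zero if_distrib[of "\<lambda>x. _ * x"] cong: if_cong)
  finally show ?thesis by (simp add: ps_deriv_def)
qed

lemma ps_mul_zero_right: "ps_mul f (\<lambda>_. 0) = (\<lambda>_. 0)"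
  unfolding ps_mul_def by simp

lemma Cmat_eq: "Cmat C a b = (\<lambda>m. \<Sum>g\<in>UNIV. C a b g * ps_var g m)"
  unfolding Cmat_def ps_setsum_def ps_smult_def ..

lemma var_Cmat_zero:
  fixes C :: "'n::finite \<Rightarrow> 'n \<Rightarrow> 'n \<Rightarrow> 'k::field_char_0"
  assumes anti: "\<And>l m n. C l m n = - C l n m"
  shows "(\<lambda>m. \<Sum>c\<in>UNIV. ps_mul (ps_var c) (Cmat C g c) m) = (\<lambda>_. 0)"
proof (rule ext)
  fix m :: "'n \<Rightarrow> nat"
  have iff: "(1 \<le> m c \<and> m(c := m c - 1) = unitm h) \<longleftrightarrow> m = (\<lambda>i. unitm c i + unitm h i)" for c h
  proof
    assume A: "1 \<le> m c \<and> m(c := m c - 1) = unitm h"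
    show "m = (\<lambda>i. unitm c i + unitm h i)"
    proof (rule ext)
      fix i
      show "m i = unitm c i + unitm h i"
        using fun_cong[OF A[THEN conjunct2], of i] A by (cases "i = c") (auto simp: unitm_def)
    qed
  next
    assume B: "m = (\<lambda>i. unitm c i + unitm h i)"
    show "1 \<le> m c \<and> m(c := m c - 1) = unitm h"
      using B by (auto simp: unitm_def fun_eq_iff)
  qed
  have ind: "(if 1 \<le> m c then (if m(c := m c - 1) = unitm h then 1 else 0) else 0)
      = (if m = (\<lambda>i. unitm c i + unitm h i) then (1::'k) else 0)" for c h
    using iff[of c h] by (simp only: if_split_eq1) (cases "1 \<le> m c"; simp)
  define S where "S = (\<Sum>c\<in>UNIV. \<Sum>h\<in>UNIV. C g c h * (if m = (\<lambda>i. unitm c i + unitm h i) then (1::'k) else 0))"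
  have step: "ps_mul (ps_var c) (Cmat C g c) m = (\<Sum>h\<in>UNIV. C g c h * (if m = (\<lambda>i. unitm c i + unitm h i) then (1::'k) else 0))" for c
  proof -
    have "ps_mul (ps_var c) (Cmat C g c) m = (if 1 \<le> m c then Cmat C g c (m(c := m c - 1)) else 0)"
      by (rule ps_mul_var)
    also have "\<dots> = (\<Sum>h\<in>UNIV. C g c h * (if 1 \<le> m c then (if m(c := m c - 1) = unitm h then 1 else 0) else 0))"
      by (simp add: Cmat_eq ps_var_def)
    also have "\<dots> = (\<Sum>h\<in>UNIV. C g c h * (if m = (\<lambda>i. unitm c i + unitm h i) then (1::'k) else 0))"
      by (simp only: ind)
    finally show ?thesis .
  qed
  have "(\<Sum>c\<in>UNIV. ps_mul (ps_var c) (Cmat C g c) m) = S"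
    unfolding S_def by (simp only: step)
  also have "S = - S"
  proof -
    have comm: "(\<lambda>i. unitm c i + unitm h i) = (\<lambda>i. unitm h i + unitm c i)" for c h
      by (simp add: add.commute)
    have trm: "C g h c * (if m = (\<lambda>i. unitm h i + unitm c i) then (1::'k) else 0)
        = - (C g c h * (if m = (\<lambda>i. unitm c i + unitm h i) then (1::'k) else 0))" for c h
      using anti[of g h c] comm[of c h] by simp
    have "S = (\<Sum>h\<in>UNIV. \<Sum>c\<in>UNIV. C g c h * (if m = (\<lambda>i. unitm c i + unitm h i) then (1::'k) else 0))"
      unfolding S_def by (rule sum.swap[of "\<lambda>c h. C g c h * (if m = (\<lambda>i. unitm c i + unitm h i) then (1::'k) else 0)"])
    also have "\<dots> = (\<Sum>c\<in>UNIV. \<Sum>h\<in>UNIV. - (C g c h * (if m = (\<lambda>i. unitm c i + unitm h i) then (1::'k) else 0)))"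
      by (intro sum.cong refl) (rule trm)
    also have "\<dots> = - S" unfolding S_def by (simp add: sum_negf)
    finally show ?thesis .
  qed
  hence "S = 0" by simp
  finally show "(\<Sum>c\<in>UNIV. ps_mul (ps_var c) (Cmat C g c) m) = 0" .
qed

lemma mon_le_deg: "m c \<le> deg m"
  unfolding deg_def by (rule member_le_sum) auto

lemma ps_mul_lcomm: "ps_mul a (ps_mul b c) = ps_mul b (ps_mul a (c::('n::finite,'k::field) ps))"
proof -
  have "ps_mul a (ps_mul b c) = ps_mul (ps_mul a b) c" by (rule ps_mul_assoc)
  also have "\<dots> = ps_mul (ps_mul b a) c" by (simp only: ps_mul_comm[of a b])
  also have "\<dots> = ps_mul b (ps_mul a c)" by (rule ps_mul_assoc[symmetric])
  finally show ?thesis .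
qed

lemma var_const: "ps_mul (ps_var c) (ps_const k) = (\<lambda>m. k * ps_var c m)"
  by (subst ps_mul_comm) (rule ps_mul_const)

lemma var_cpow_Suc_zero:
  fixes C :: "'n::finite \<Rightarrow> 'n \<Rightarrow> 'n \<Rightarrow> 'k::field_char_0"
  assumes anti: "\<And>l m n. C l m n = - C l n m"
  shows "(\<lambda>m. \<Sum>c\<in>UNIV. ps_mul (ps_var c) (cpow C (Suc M) e c) m) = (\<lambda>_. 0)"
proof -
  have "(\<lambda>m. \<Sum>c\<in>UNIV. ps_mul (ps_var c) (cpow C (Suc M) e c) m)
      = (\<lambda>m. \<Sum>c\<in>UNIV. \<Sum>g\<in>UNIV. ps_mul (cpow C M e g) (ps_mul (ps_var c) (Cmat C g c)) m)"
    by (simp only: cpow.simps ps_setsum_def ps_mul_sum_right finite_UNIV ps_mul_lcomm[of "ps_var _"])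
  also have "\<dots> = (\<lambda>m. \<Sum>g\<in>UNIV. ps_mul (cpow C M e g) (\<lambda>m. \<Sum>c\<in>UNIV. ps_mul (ps_var c) (Cmat C g c) m) m)"
    by (subst sum.swap) (simp add: ps_mul_sum_right)
  also have "\<dots> = (\<lambda>_. 0)" by (simp add: var_Cmat_zero[OF anti] ps_mul_zero_right)
  finally show ?thesis .
qed

lemma phi_var:
  fixes C :: "'n::finite \<Rightarrow> 'n \<Rightarrow> 'n \<Rightarrow> 'k::field_char_0"
  assumes anti: "\<And>l m n. C l m n = - C l n m"
  shows "(\<lambda>m. \<Sum>c\<in>UNIV. ps_mul (ps_var c) (phi C e c) m) = ps_var e"
proof (rule ext)
  fix m :: "'n \<Rightarrow> nat"
  define \<kappa> where "\<kappa> N = (-1)^N * of_rat (bern N) / (fact N :: 'k)" for N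
  have phi': "phi C e c m' = \<kappa> (deg m') * cpow C (deg m') e c m'" for c m'
    by (simp add: phi_coef \<kappa>_def)
  show "(\<Sum>c\<in>UNIV. ps_mul (ps_var c) (phi C e c) m) = ps_var e m"
  proof (cases "deg m")
    case 0
    hence "m = (\<lambda>_. 0)" by (simp add: deg_zero_iff)
    moreover have "(\<lambda>_. 0::nat) \<noteq> unitm e" by (auto simp: unitm_def fun_eq_iff)
    ultimately show ?thesis by (simp add: ps_mul_var, simp add: ps_var_def)
  next
    case (Suc N)
    have "ps_mul (ps_var c) (phi C e c) m = \<kappa> N * ps_mul (ps_var c) (cpow C N e c) m" for c
      using Suc mon_le_deg[of m c] by (simp add: ps_mul_var phi' deg_upd)
    hence "(\<Sum>c\<in>UNIV. ps_mul (ps_var c) (phi C e c) m) = \<kappa> N * (\<Sum>c\<in>UNIV. ps_mul (ps_var c) (cpow C N e c) m)"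
      by (simp add: sum_distrib_left)
    also have "\<dots> = ps_var e m"
    proof (cases N)
      case 0
      have "\<kappa> 0 = 1" by (simp add: \<kappa>_def bern_def)
      thus ?thesis using 0 by (simp add: var_const if_distrib[of "\<lambda>x. x * _"] cong: if_cong)
    next
      case (Suc M)
      have "(\<Sum>c\<in>UNIV. ps_mul (ps_var c) (cpow C N e c) m) = 0"
      proof -
        have z: "(\<lambda>m. \<Sum>c\<in>UNIV. ps_mul (ps_var c) (cpow C (Suc M) e c) m) = (\<lambda>_. 0)"
          by (rule var_cpow_Suc_zero[OF anti])
        show ?thesis using fun_cong[OF z] Suc by simp
      qed
      moreover have "ps_var e m = 0"
        using \<open>deg m = Suc N\<close> Suc by (auto simp: ps_var_def)
      ultimately show ?thesis by simp
    qed
    finally show ?thesis .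
  qed
qed

lemma euler_Dact:
  fixes C :: "'n::finite \<Rightarrow> 'n \<Rightarrow> 'n \<Rightarrow> 'k::field_char_0"
  assumes anti: "\<And>l m n. C l m n = - C l n m"
  shows "(\<Sum>c\<in>UNIV. ps_mul (ps_var c) (Dact C c X) m) = of_nat (deg m) * X m"
proof -
  have "(\<Sum>c\<in>UNIV. ps_mul (ps_var c) (Dact C c X) m)
      = (\<Sum>c\<in>UNIV. \<Sum>e\<in>UNIV. ps_mul (ps_deriv e X) (ps_mul (ps_var c) (phi C e c)) m)"
    by (simp only: Dact_eq ps_mul_sum_right finite_UNIV ps_mul_lcomm[of "ps_var _"])
  also have "\<dots> = (\<Sum>e\<in>UNIV. ps_mul (ps_deriv e X) (\<lambda>m. \<Sum>c\<in>UNIV. ps_mul (ps_var c) (phi C e c) m) m)"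
    by (subst sum.swap) (simp add: ps_mul_sum_right)
  also have "\<dots> = (\<Sum>e\<in>UNIV. ps_mul (ps_var e) (ps_deriv e X) m)"
    by (simp add: phi_var[OF anti] ps_mul_comm)
  also have "\<dots> = (\<Sum>e\<in>UNIV. of_nat (m e) * X m)"
    by (intro sum.cong refl) (auto simp: ps_mul_var ps_deriv_def)
  also have "\<dots> = of_nat (deg m) * X m"
    by (simp add: deg_def sum_distrib_right)
  finally show ?thesis .
qed

lemma cpow_left: "cpow C (Suc N) e f = (\<lambda>m. \<Sum>d\<in>UNIV. ps_mul (Cmat C e d) (cpow C N d f) m)"
proof (induction N arbitrary: e f)
  case 0
  show ?case
    by (simp add: ps_setsum_def ps_mul_const ps_mul_comm[of "Cmat C _ _"] if_distrib[of "\<lambda>x. x * _"] cong: if_cong)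
next
  case (Suc N)
  have "cpow C (Suc (Suc N)) e f = (\<lambda>m. \<Sum>g\<in>UNIV. ps_mul (cpow C (Suc N) e g) (Cmat C g f) m)"
    by (simp only: cpow.simps ps_setsum_def)
  also have "\<dots> = (\<lambda>m. \<Sum>g\<in>UNIV. \<Sum>d\<in>UNIV. ps_mul (Cmat C e d) (ps_mul (cpow C N d g) (Cmat C g f)) m)"
    by (simp only: Suc ps_mul_sum_left finite_UNIV ps_mul_assoc)
  also have "\<dots> = (\<lambda>m. \<Sum>d\<in>UNIV. ps_mul (Cmat C e d) (\<lambda>m. \<Sum>g\<in>UNIV. ps_mul (cpow C N d g) (Cmat C g f) m) m)"
    by (subst sum.swap) (simp add: ps_mul_sum_right)
  also have "\<dots> = (\<lambda>m. \<Sum>d\<in>UNIV. ps_mul (Cmat C e d) (cpow C (Suc N) d f) m)"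
    by (simp only: cpow.simps ps_setsum_def)
  finally show ?case .
qed

lemma Cmat_deg: "Cmat C a b m \<noteq> 0 \<Longrightarrow> deg m = 1"
  using homog_Cmat unfolding homog_def by blast

lemma Cmat_zero[simp]: "Cmat C a b (\<lambda>_. 0) = 0"
  using Cmat_deg[of C a b "\<lambda>_. 0"] by auto

lemma euler_O:
  fixes C :: "'n::finite \<Rightarrow> 'n \<Rightarrow> 'n \<Rightarrow> 'k::field_char_0"
  shows "of_nat (deg m) * Omat C b a m = (\<Sum>d\<in>UNIV. ps_mul (Omat C b d) (Cmat C d a) m)"
proof (cases "deg m")
  case 0
  hence "m = (\<lambda>_. 0)" by (simp add: deg_zero_iff)
  hence "ps_mul (Omat C b d) (Cmat C d a) m = 0" for d
    by (simp add: ps_mul_def le_fun_def)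
  then show ?thesis using 0 by simp
next
  case (Suc N)
  have "(\<Sum>d\<in>UNIV. ps_mul (Omat C b d) (Cmat C d a) m)
      = (\<Sum>d\<in>UNIV. ps_mul (\<lambda>p. cpow C N b d p / fact N) (Cmat C d a) m)"
  proof (intro sum.cong refl)
    fix d
    show "ps_mul (Omat C b d) (Cmat C d a) m = ps_mul (\<lambda>p. cpow C N b d p / fact N) (Cmat C d a) m"
      unfolding ps_mul_def
    proof (intro sum.cong refl)
      fix p assume p: "p \<in> {p. p \<le> m}"
      show "Omat C b d p * Cmat C d a (\<lambda>i. m i - p i) = cpow C N b d p / fact N * Cmat C d a (\<lambda>i. m i - p i)"
      proof (cases "Cmat C d a (\<lambda>i. m i - p i) = 0")
        case False
        hence "deg p = N" using Cmat_deg deg_diff[of p m] deg_le[of p m] p Suc by fastforce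
        thus ?thesis by (simp add: Omat_coef)
      qed simp
    qed
  qed
  also have "\<dots> = cpow C (Suc N) b a m / fact N"
    by (simp add: ps_setsum_def ps_mul_scal_left[of "inverse (fact N)", simplified] divide_inverse
        sum_distrib_right sum_distrib_left mult.commute)
  also have "\<dots> = of_nat (deg m) * Omat C b a m"
  proof -
    have nz: "(of_nat (Suc N)::'k) \<noteq> 0" by (rule of_nat_neq_0)
    have "of_nat (Suc N) * (x / (of_nat (Suc N) * fact N)) = x / (fact N::'k)" for x
      using nz by simp
    thus ?thesis using Suc by (simp only: Omat_coef fact_Suc)
  qed
  finally show ?thesis ..
qed

lemma euler_Oinv:
  fixes C :: "'n::finite \<Rightarrow> 'n \<Rightarrow> 'n \<Rightarrow> 'k::field_char_0"
  shows "of_nat (deg m) * Oinv C e f m = - (\<Sum>d\<in>UNIV. ps_mul (Cmat C e d) (Oinv C d f) m)"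
proof (cases "deg m")
  case 0
  hence "m = (\<lambda>_. 0)" by (simp add: deg_zero_iff)
  hence "ps_mul (Oinv C d f) (Cmat C e d) m = 0" for d
    by (simp add: ps_mul_def le_fun_def)
  then show ?thesis using 0 by (simp add: ps_mul_comm[of "Cmat C _ _"])
next
  case (Suc N)
  have "(\<Sum>d\<in>UNIV. ps_mul (Cmat C e d) (Oinv C d f) m)
      = (\<Sum>d\<in>UNIV. ps_mul (\<lambda>p. (-1)^N / fact N * cpow C N d f p) (Cmat C e d) m)"
  proof (intro sum.cong refl)
    fix d
    show "ps_mul (Cmat C e d) (Oinv C d f) m = ps_mul (\<lambda>p. (-1)^N / fact N * cpow C N d f p) (Cmat C e d) m"
      unfolding ps_mul_comm[of "Cmat C e d"] unfolding ps_mul_def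
    proof (intro sum.cong refl)
      fix p assume p: "p \<in> {p. p \<le> m}"
      show "Oinv C d f p * Cmat C e d (\<lambda>i. m i - p i) = (-1)^N / fact N * cpow C N d f p * Cmat C e d (\<lambda>i. m i - p i)"
      proof (cases "Cmat C e d (\<lambda>i. m i - p i) = 0")
        case False
        hence "deg p = N" using Cmat_deg deg_diff[of p m] deg_le[of p m] p Suc by fastforce
        thus ?thesis by (simp add: Oinv_coef)
      qed simp
    qed
  qed
  also have "\<dots> = (-1)^N / fact N * (\<Sum>d\<in>UNIV. ps_mul (Cmat C e d) (cpow C N d f) m)"
    by (simp only: ps_mul_scal_left) (simp add: sum_distrib_left ps_mul_comm[of "Cmat C _ _"])
  also have "\<dots> = (-1)^N / fact N * cpow C (Suc N) e f m"
    by (simp only: cpow_left[of C N e f])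
  finally have R: "(\<Sum>d\<in>UNIV. ps_mul (Cmat C e d) (Oinv C d f) m) = (-1)^N / fact N * cpow C (Suc N) e f m" .
  have nz: "(of_nat (Suc N)::'k) \<noteq> 0" by (rule of_nat_neq_0)
  have "of_nat (Suc N) * ((-1)^Suc N * x / (of_nat (Suc N) * fact N)) = - ((-1)^N / fact N * (x::'k))" for x
    using nz by simp
  thus ?thesis using Suc R by (simp only: Oinv_coef fact_Suc)
qed

lemma PL:
  fixes C :: "'n::finite \<Rightarrow> 'n \<Rightarrow> 'n \<Rightarrow> 'k::field_char_0"
    and A :: "'n \<Rightarrow> 'i \<Rightarrow> ('n, 'k) ps"
  assumes eul: "\<And>i m. (\<Sum>c\<in>UNIV. ps_mul (ps_var c) (A c i) m) = 0"
    and clo: "\<And>a b i m. (\<And>c j. A c j m = 0) \<Longrightarrow> Dact C b (A a i) m - Dact C a (A b i) m = 0"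
  shows "A c i m = 0"
proof -
  have "\<forall>c i (m::'n \<Rightarrow> nat). deg m < K \<longrightarrow> A c i m = 0" for K
  proof (induction K)
    case 0 then show ?case by simp
  next
    case (Suc K)
    have IH: "deg m' < K \<Longrightarrow> A c j m' = 0" for m' c j using Suc by blast
    show ?case
    proof (intro allI impI)
      fix c i and m :: "'n \<Rightarrow> nat" assume "deg m < Suc K"
      show "A c i m = 0"
      proof (cases "deg m < K")
        case True then show ?thesis by (rule IH)
      next
        case False
        with \<open>deg m < Suc K\<close> have dm: "deg m = K" by simp
        define m' where "m' = m(c := Suc (m c))"
        have t: "(if 1 \<le> m' e then A e i (m'(e := m' e - 1)) else 0) * of_nat (Suc (m c))
            = of_nat (m' e) * A c i m" for e
        proof (cases "e = c")
          case True
          then show ?thesis by (simp add: m'_def mult.commute)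
        next
          case ec: False
          show ?thesis
          proof (cases "m e = 0")
            case True
            then show ?thesis using ec by (simp add: m'_def)
          next
            case False
            define m'' where "m'' = m(e := m e - 1)"
            have me: "m e \<le> deg m" by (rule mon_le_deg)
            have dm'': "Suc (deg m'') = K" using False me dm by (simp add: m''_def deg_upd)
            have low: "deg p < K \<Longrightarrow> A x j p = 0" for p x j by (rule IH)
            have "Dact C c (A e i) m'' - Dact C e (A c i) m'' = 0"
              by (rule clo) (rule IH, simp add: dm''[symmetric])
            hence "of_nat (Suc (m'' c)) * A e i (m''(c := Suc (m'' c)))
                = of_nat (Suc (m'' e)) * A c i (m''(e := Suc (m'' e)))"
              by (simp add: Dact_low[OF low dm''])
            moreover have "m''(c := Suc (m'' c)) = m'(e := m' e - 1)"
              using ec by (auto simp: m''_def m'_def fun_eq_iff)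
            moreover have "m''(e := Suc (m'' e)) = m"
              using False by (auto simp: m''_def fun_eq_iff)
            moreover have "m'' c = m c" "Suc (m'' e) = m e" "m' e = m e"
              using ec False by (auto simp: m''_def m'_def)
            ultimately show ?thesis using ec False
              by (simp add: m'_def mult.commute)
          qed
        qed
        have "0 = (\<Sum>e\<in>UNIV. ps_mul (ps_var e) (A e i) m') * of_nat (Suc (m c))"
          using eul by simp
        also have "\<dots> = (\<Sum>e\<in>UNIV. of_nat (m' e) * A c i m)"
          by (simp only: ps_mul_var sum_distrib_right t)
        also have "\<dots> = of_nat (deg m') * A c i m"
          by (simp add: deg_def sum_distrib_right)
        finally have "of_nat (deg m') * A c i m = 0" by simp
        moreover have "deg m' = Suc K" using dm mon_le_deg[of m c] by (simp add: m'_def deg_upd)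
        moreover have "(1 + of_nat K :: 'k) \<noteq> 0" using of_nat_neq_0[of K, where 'a='k] by simp
        ultimately show ?thesis by simp
      qed
    qed
  qed
  thus ?thesis by (meson lessI)
qed

lemma lin3: "(x::'a::ab_group_add) + y + z = 0 \<Longrightarrow> - x - z + - y = 0"
proof -
  assume h: "x + y + z = 0"
  have "- x - z + - y = - (x + y + z)" by (simp add: algebra_simps)
  with h show ?thesis by simp
qed

lemma lin3': "(x::'a::ab_group_add) + y + z = 0 \<Longrightarrow> - x + - y - z = 0"
proof -
  assume h: "x + y + z = 0"
  have "- x + - y - z = - (x + y + z)" by (simp add: algebra_simps)
  with h show ?thesis by simp
qed

lemma comb3: "(\<Sum>g\<in>A. W g * P g) - (\<Sum>g\<in>A. W g * Q g) + (\<Sum>g\<in>A. W g * R g)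
   = (\<Sum>g\<in>A. (W g::'a::comm_ring) * (P g - Q g + R g))"
  by (simp add: sum.distrib sum_subtractf algebra_simps)

lemma comb3': "(\<Sum>g\<in>A. W g * P g) + (\<Sum>g\<in>A. W g * Q g) - (\<Sum>g\<in>A. W g * R g)
   = (\<Sum>g\<in>A. (W g::'a::comm_ring) * (P g + Q g - R g))"
  by (simp add: sum.distrib sum_subtractf algebra_simps)

lemma jac_O:
  fixes C :: "'n::finite \<Rightarrow> 'n \<Rightarrow> 'n \<Rightarrow> 'k::field_char_0"
  assumes anti: "\<And>l m n. C l m n = - C l n m"
    and jac: "\<And>l m n r. (\<Sum>s\<in>UNIV. C s m n * C l s r + C s n r * C l s m + C s r m * C l s n) = 0"
  shows "(\<Sum>l\<in>UNIV. C l a b * (\<Sum>g\<in>UNIV. C g f l * Og g))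
       - (\<Sum>d\<in>UNIV. C d f a * (\<Sum>g\<in>UNIV. C g d b * Og g))
       + (\<Sum>d\<in>UNIV. C d f b * (\<Sum>g\<in>UNIV. C g d a * Og g)) = 0"
proof -
  have sw: "(\<Sum>l\<in>UNIV. P l * (\<Sum>g\<in>UNIV. Q g l * Og g)) = (\<Sum>g\<in>UNIV. Og g * (\<Sum>l\<in>UNIV. P l * Q g l))"
    for P :: "'n \<Rightarrow> 'k" and Q
    unfolding sum_distrib_left by (subst sum.swap) (simp add: mult_ac)
  have J: "(\<Sum>l\<in>UNIV. C l a b * C g f l) - (\<Sum>d\<in>UNIV. C d f a * C g d b) + (\<Sum>d\<in>UNIV. C d f b * C g d a) = 0" for g
  proof -
    have 1: "(\<Sum>l\<in>UNIV. C l a b * C g f l) = - (\<Sum>l\<in>UNIV. C l a b * C g l f)"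
      unfolding sum_negf[symmetric] by (rule sum.cong[OF refl]) (simp add: anti[of g f])
    have 3: "(\<Sum>d\<in>UNIV. C d f b * C g d a) = - (\<Sum>d\<in>UNIV. C d b f * C g d a)"
      unfolding sum_negf[symmetric] by (rule sum.cong[OF refl]) (simp add: anti[of _ f b])
    have j: "(\<Sum>s\<in>UNIV. C s a b * C g s f) + (\<Sum>s\<in>UNIV. C s b f * C g s a) + (\<Sum>s\<in>UNIV. C s f a * C g s b) = 0"
      using jac[where l=g and m=a and n=b and r=f] by (simp add: sum.distrib)
    show ?thesis unfolding 1 3 using lin3[OF j] .
  qed
  show ?thesis unfolding sw comb3 J by simp
qed

lemma jac_I:
  fixes C :: "'n::finite \<Rightarrow> 'n \<Rightarrow> 'n \<Rightarrow> 'k::field_char_0"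
  assumes anti: "\<And>l m n. C l m n = - C l n m"
    and jac: "\<And>l m n r. (\<Sum>s\<in>UNIV. C s m n * C l s r + C s n r * C l s m + C s r m * C l s n) = 0"
  shows "(\<Sum>l\<in>UNIV. C l a b * (\<Sum>g\<in>UNIV. C e g l * Ov g))
       + (\<Sum>d\<in>UNIV. C e d a * (\<Sum>g\<in>UNIV. C d g b * Ov g))
       - (\<Sum>d\<in>UNIV. C e d b * (\<Sum>g\<in>UNIV. C d g a * Ov g)) = 0"
proof -
  have sw: "(\<Sum>l\<in>UNIV. P l * (\<Sum>g\<in>UNIV. Q g l * Ov g)) = (\<Sum>g\<in>UNIV. Ov g * (\<Sum>l\<in>UNIV. P l * Q g l))"
    for P :: "'n \<Rightarrow> 'k" and Q
    unfolding sum_distrib_left by (subst sum.swap) (simp add: mult_ac)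
  have J: "(\<Sum>l\<in>UNIV. C l a b * C e g l) + (\<Sum>d\<in>UNIV. C e d a * C d g b) - (\<Sum>d\<in>UNIV. C e d b * C d g a) = 0" for g
  proof -
    have 1: "(\<Sum>l\<in>UNIV. C l a b * C e g l) = - (\<Sum>l\<in>UNIV. C l a b * C e l g)"
      unfolding sum_negf[symmetric] by (rule sum.cong[OF refl]) (simp add: anti[of e g])
    have 2: "(\<Sum>d\<in>UNIV. C e d a * C d g b) = - (\<Sum>d\<in>UNIV. C d b g * C e d a)"
      unfolding sum_negf[symmetric] by (rule sum.cong[OF refl]) (simp add: anti[of _ g b])
    have 3: "(\<Sum>d\<in>UNIV. C e d b * C d g a) = (\<Sum>d\<in>UNIV. C d g a * C e d b)"
      by (simp add: mult.commute)
    have j: "(\<Sum>s\<in>UNIV. C s a b * C e s g) + (\<Sum>s\<in>UNIV. C s b g * C e s a) + (\<Sum>s\<in>UNIV. C s g a * C e s b) = 0"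
      using jac[where l=e and m=a and n=b and r=g] by (simp add: sum.distrib)
    show ?thesis unfolding 1 2 3 using lin3'[OF j] .
  qed
  show ?thesis unfolding sw comb3' J by simp
qed

lemma ps_mul_diff_right: "ps_mul g (\<lambda>m. a m - b m) = (\<lambda>m. ps_mul g a m - ps_mul g b m)"
  for g :: "('n::finite,'k::field) ps"
  by (subst ps_mul_comm, simp add: ps_mul_diff_left, metis ps_mul_comm)

lemma KEY_O:
  fixes C :: "'n::finite \<Rightarrow> 'n \<Rightarrow> 'n \<Rightarrow> 'k::field_char_0"
  assumes anti: "\<And>l m n. C l m n = - C l n m"
    and jac: "\<And>l m n r. (\<Sum>s\<in>UNIV. C s m n * C l s r + C s n r * C l s m + C s r m * C l s n) = 0"
    and F1: "\<And>a b X m. Dact C b (Dact C a X) m - Dact C a (Dact C b X) m = (\<Sum>l\<in>UNIV. C l a b * Dact C l X m)"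
  shows "Dact C c (Omat C e f) = (\<lambda>m. \<Sum>d\<in>UNIV. C d f c * Omat C e d m)"
proof -
  define A where "A = (\<lambda>c (p::'n \<times> 'n) m. Dact C c (Omat C (fst p) (snd p)) m - (\<Sum>d\<in>UNIV. C d (snd p) c * Omat C (fst p) d m))"
  have "A c (e,f) m = 0" for m
  proof (rule PL[of A C])
    fix i :: "'n \<times> 'n" and m :: "'n \<Rightarrow> nat"
    obtain e f where i: "i = (e,f)" by (cases i)
    have s2: "(\<Sum>c\<in>UNIV. ps_mul (ps_var c) (\<lambda>m. \<Sum>d\<in>UNIV. C d f c * Omat C e d m) m)
        = (\<Sum>d\<in>UNIV. ps_mul (Omat C e d) (Cmat C d f) m)"
    proof -
      have "(\<Sum>c\<in>UNIV. ps_mul (ps_var c) (\<lambda>m. \<Sum>d\<in>UNIV. C d f c * Omat C e d m) m)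
          = (\<Sum>c\<in>UNIV. \<Sum>d\<in>UNIV. C d f c * ps_mul (Omat C e d) (ps_var c) m)"
        by (simp add: ps_mul_comm[of "ps_var _"] ps_mul_sum_left ps_mul_scal_left)
      also have "\<dots> = (\<Sum>d\<in>UNIV. \<Sum>c\<in>UNIV. C d f c * ps_mul (Omat C e d) (ps_var c) m)"
        by (rule sum.swap)
      also have "\<dots> = (\<Sum>d\<in>UNIV. ps_mul (Omat C e d) (Cmat C d f) m)"
        by (simp add: Cmat_eq ps_mul_sum_right ps_mul_scal_right)
      finally show ?thesis .
    qed
    show "(\<Sum>c\<in>UNIV. ps_mul (ps_var c) (A c i) m) = 0"
      unfolding i A_def
      by (simp add: ps_mul_diff_right sum_subtractf euler_Dact[OF anti] s2 euler_O[symmetric])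
  next
    fix a b :: 'n and i :: "'n \<times> 'n" and m :: "'n \<Rightarrow> nat"
    assume prem: "\<And>c j. A c j m = 0"
    obtain e f where i: "i = (e,f)" by (cases i)
    have P: "Dact C x (Omat C e y) m = (\<Sum>g\<in>UNIV. C g y x * Omat C e g m)" for x y
      using prem[of x "(e,y)"] by (simp add: A_def)
    have Dexp: "Dact C b (A a (e,f)) m = Dact C b (Dact C a (Omat C e f)) m - (\<Sum>d\<in>UNIV. C d f a * Dact C b (Omat C e d) m)" for a b
      by (simp add: A_def Dact_diff Dact_sum Dact_scal)
    have "Dact C b (A a i) m - Dact C a (A b i) m
       = (Dact C b (Dact C a (Omat C e f)) m - Dact C a (Dact C b (Omat C e f)) m)
         - (\<Sum>d\<in>UNIV. C d f a * Dact C b (Omat C e d) m) + (\<Sum>d\<in>UNIV. C d f b * Dact C a (Omat C e d) m)"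
      unfolding i Dexp by (simp add: algebra_simps)
    also have "\<dots> = (\<Sum>l\<in>UNIV. C l a b * (\<Sum>g\<in>UNIV. C g f l * Omat C e g m))
       - (\<Sum>d\<in>UNIV. C d f a * (\<Sum>g\<in>UNIV. C g d b * Omat C e g m))
       + (\<Sum>d\<in>UNIV. C d f b * (\<Sum>g\<in>UNIV. C g d a * Omat C e g m))"
      by (simp only: F1 P)
    also have "\<dots> = 0" by (rule jac_O[OF anti jac])
    finally show "Dact C b (A a i) m - Dact C a (A b i) m = 0" .
  qed
  thus ?thesis by (auto simp: A_def fun_eq_iff)
qed

lemma KEY_I:
  fixes C :: "'n::finite \<Rightarrow> 'n \<Rightarrow> 'n \<Rightarrow> 'k::field_char_0"
  assumes anti: "\<And>l m n. C l m n = - C l n m"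
    and jac: "\<And>l m n r. (\<Sum>s\<in>UNIV. C s m n * C l s r + C s n r * C l s m + C s r m * C l s n) = 0"
    and F1: "\<And>a b X m. Dact C b (Dact C a X) m - Dact C a (Dact C b X) m = (\<Sum>l\<in>UNIV. C l a b * Dact C l X m)"
  shows "Dact C c (Oinv C e f) = (\<lambda>m. - (\<Sum>d\<in>UNIV. C e d c * Oinv C d f m))"
proof -
  define A where "A = (\<lambda>c (p::'n \<times> 'n) m. Dact C c (Oinv C (fst p) (snd p)) m + (\<Sum>d\<in>UNIV. C (fst p) d c * Oinv C d (snd p) m))"
  have "A c (e,f) m = 0" for m
  proof (rule PL[of A C])
    fix i :: "'n \<times> 'n" and m :: "'n \<Rightarrow> nat"
    obtain e f where i: "i = (e,f)" by (cases i)
    have s2: "(\<Sum>c\<in>UNIV. ps_mul (ps_var c) (\<lambda>m. \<Sum>d\<in>UNIV. C e d c * Oinv C d f m) m)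
        = (\<Sum>d\<in>UNIV. ps_mul (Cmat C e d) (Oinv C d f) m)"
    proof -
      have "(\<Sum>c\<in>UNIV. ps_mul (ps_var c) (\<lambda>m. \<Sum>d\<in>UNIV. C e d c * Oinv C d f m) m)
          = (\<Sum>c\<in>UNIV. \<Sum>d\<in>UNIV. C e d c * ps_mul (ps_var c) (Oinv C d f) m)"
        by (simp add: ps_mul_sum_right ps_mul_scal_right)
      also have "\<dots> = (\<Sum>d\<in>UNIV. \<Sum>c\<in>UNIV. C e d c * ps_mul (ps_var c) (Oinv C d f) m)"
        by (rule sum.swap)
      also have "\<dots> = (\<Sum>d\<in>UNIV. ps_mul (Cmat C e d) (Oinv C d f) m)"
        by (simp add: Cmat_eq ps_mul_sum_left ps_mul_scal_left)
      finally show ?thesis .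
    qed
    show "(\<Sum>c\<in>UNIV. ps_mul (ps_var c) (A c i) m) = 0"
      unfolding i A_def
      by (simp add: ps_mul_add_right sum.distrib euler_Dact[OF anti] s2 euler_Oinv)
  next
    fix a b :: 'n and i :: "'n \<times> 'n" and m :: "'n \<Rightarrow> nat"
    assume prem: "\<And>c j. A c j m = 0"
    obtain e f where i: "i = (e,f)" by (cases i)
    have P: "Dact C x (Oinv C y f) m = (\<Sum>g\<in>UNIV. C y g x * - Oinv C g f m)" for x y
    proof -
      have "Dact C x (Oinv C y f) m = - (\<Sum>g\<in>UNIV. C y g x * Oinv C g f m)"
        using prem[of x "(y,f)"] by (simp add: A_def eq_neg_iff_add_eq_0)
      thus ?thesis by (simp add: sum_negf)
    qed
    have Dexp: "Dact C b (A a (e,f)) m = Dact C b (Dact C a (Oinv C e f)) m + (\<Sum>d\<in>UNIV. C e d a * Dact C b (Oinv C d f) m)" for a b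
      by (simp add: A_def Dact_add Dact_sum Dact_scal)
    have "Dact C b (A a i) m - Dact C a (A b i) m
       = (Dact C b (Dact C a (Oinv C e f)) m - Dact C a (Dact C b (Oinv C e f)) m)
         + (\<Sum>d\<in>UNIV. C e d a * Dact C b (Oinv C d f) m) - (\<Sum>d\<in>UNIV. C e d b * Dact C a (Oinv C d f) m)"
      unfolding i Dexp by (simp add: algebra_simps)
    also have "\<dots> = (\<Sum>l\<in>UNIV. C l a b * (\<Sum>g\<in>UNIV. C e g l * - Oinv C g f m))
       + (\<Sum>d\<in>UNIV. C e d a * (\<Sum>g\<in>UNIV. C d g b * - Oinv C g f m))
       - (\<Sum>d\<in>UNIV. C e d b * (\<Sum>g\<in>UNIV. C d g a * - Oinv C g f m))"
      by (simp only: F1 P)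
    also have "\<dots> = 0" by (rule jac_I[OF anti jac])
    finally show "Dact C b (A a i) m - Dact C a (A b i) m = 0" .
  qed
  thus ?thesis by (auto simp: A_def fun_eq_iff eq_neg_iff_add_eq_0)
qed

locale UH =
  fixes C :: "'n::{finite,linorder} \<Rightarrow> 'n \<Rightarrow> 'n \<Rightarrow> 'k::field_char_0"
    and sc :: "'k \<Rightarrow> 'u::ring_1" and x :: "'n \<Rightarrow> 'u"
    and iU :: "'u \<Rightarrow> 'h::ring_1" and jS :: "('n, 'k) ps \<Rightarrow> 'h"
  assumes lie: "lie_structure C" and U: "is_Ug C sc x" and H: "is_HL C sc x iU jS"
begin

lemmas lie' = lie[unfolded lie_structure_def]
lemmas anti = lie'[THEN conjunct1, rule_format]
lemmas jac = lie'[THEN conjunct2, rule_format]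
lemmas U' = U[unfolded is_Ug_def]
lemmas H' = H[unfolded is_HL_def]
lemmas sc_add = U'[THEN conjunct1, rule_format]
lemmas sc_mul = U'[THEN conjunct2, THEN conjunct1, rule_format]
lemmas sc_one = U'[THEN conjunct2, THEN conjunct2, THEN conjunct1, rule_format]
lemmas sc_comm = U'[THEN conjunct2, THEN conjunct2, THEN conjunct2, THEN conjunct1, rule_format]
lemmas bracket = U'[THEN conjunct2, THEN conjunct2, THEN conjunct2, THEN conjunct2, THEN conjunct1, rule_format]
lemmas U_indep0 = U'[THEN conjunct2, THEN conjunct2, THEN conjunct2, THEN conjunct2, THEN conjunct2, THEN conjunct1, rule_format]
lemmas U_span0 = U'[THEN conjunct2, THEN conjunct2, THEN conjunct2, THEN conjunct2, THEN conjunct2, THEN conjunct2, rule_format]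
lemmas iU_add = H'[THEN conjunct1, rule_format]
lemmas iU_mul = H'[THEN conjunct2, THEN conjunct1, rule_format]
lemmas iU_one = H'[THEN conjunct2, THEN conjunct2, THEN conjunct1, rule_format]
lemmas jS_add = H'[THEN conjunct2, THEN conjunct2, THEN conjunct2, THEN conjunct1, rule_format]
lemmas jS_mul = H'[THEN conjunct2, THEN conjunct2, THEN conjunct2, THEN conjunct2, THEN conjunct1, rule_format]
lemmas jS_const = H'[THEN conjunct2, THEN conjunct2, THEN conjunct2, THEN conjunct2, THEN conjunct2, THEN conjunct1, rule_format]
lemmas cross = H'[THEN conjunct2, THEN conjunct2, THEN conjunct2, THEN conjunct2, THEN conjunct2, THEN conjunct2, THEN conjunct1, rule_format]
lemmas H_indep0 = H'[THEN conjunct2, THEN conjunct2, THEN conjunct2, THEN conjunct2, THEN conjunct2, THEN conjunct2, THEN conjunct2, THEN conjunct1, rule_format]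
lemmas H_span0 = H'[THEN conjunct2, THEN conjunct2, THEN conjunct2, THEN conjunct2, THEN conjunct2, THEN conjunct2, THEN conjunct2, THEN conjunct2, rule_format]

lemma U_span: "\<exists>W c. finite W \<and> W \<subseteq> {w. sorted w} \<and> u = (\<Sum>w\<in>W. sc (c w) * pbw x w)"
  by (rule U_span0)
lemma H_indep: "finite W \<Longrightarrow> W \<subseteq> {w. sorted w} \<Longrightarrow> (\<Sum>w\<in>W. iU (pbw x w) * jS (f w)) = 0 \<Longrightarrow> w \<in> W \<Longrightarrow> f w = (\<lambda>_. 0)"
  using H_indep0[of W f] by simp
lemma H_span: "\<exists>W f. finite W \<and> W \<subseteq> {w. sorted w} \<and> h = (\<Sum>w\<in>W. iU (pbw x w) * jS (f w))"
  by (rule H_span0)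

thm sc_add sc_mul sc_one sc_comm bracket iU_add iU_mul iU_one jS_add jS_mul jS_const cross anti jac

lemma sc_zero[simp]: "sc 0 = 0"
  using sc_add[of 0 0] by simp
lemma iU_zero[simp]: "iU 0 = 0"
  using iU_add[of 0 0] by simp
lemma iU_minus: "iU (- u) = - iU u"
  using iU_add[of u "- u"] by (simp add: add_eq_0_iff)
lemma iU_diff: "iU (u - v) = iU u - iU v"
  using iU_add[of u "- v"] by (simp add: iU_minus)
lemma iU_sum: "iU (\<Sum>i\<in>I. f i) = (\<Sum>i\<in>I. iU (f i))"
  by (induction I rule: infinite_finite_induct) (auto simp: iU_add)
lemma sc_neg: "sc (- a) = - sc a"
  using sc_add[of a "- a"] by (simp add: add_eq_0_iff)

lemma jS_add': "jS (\<lambda>m. a m + b m) = jS a + jS b"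
  using jS_add[of a b] by (simp add: ps_add_def)
lemma jS_zero[simp]: "jS (\<lambda>_. 0) = 0"
  using jS_add'[of "\<lambda>_. 0" "\<lambda>_. 0"] by simp
lemma jS_neg: "jS (\<lambda>m. - a m) = - jS a"
  using jS_add'[of a "\<lambda>m. - a m"] by (simp add: add_eq_0_iff)
lemma jS_diff': "jS (\<lambda>m. a m - b m) = jS a - jS b"
  using jS_add'[of a "\<lambda>m. - b m"] by (simp add: jS_neg)
lemma jS_sum: "jS (\<lambda>m. \<Sum>i\<in>I. X i m) = (\<Sum>i\<in>I. jS (X i))"
proof (induction I rule: infinite_finite_induct)
  case (insert i I)
  have "jS (\<lambda>m. \<Sum>i\<in>insert i I. X i m) = jS (\<lambda>m. X i m + (\<Sum>i\<in>I. X i m))"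
    using insert by simp
  also have "\<dots> = jS (X i) + jS (\<lambda>m. \<Sum>i\<in>I. X i m)" by (rule jS_add'[of "X i" "\<lambda>m. \<Sum>i\<in>I. X i m", simplified])
  finally show ?case using insert by simp
qed auto
lemma jS_scal: "jS (\<lambda>m. k * a m) = iU (sc k) * jS a"
  using jS_mul[of "ps_const k" a] by (simp add: ps_mul_const jS_const)
lemma jS_comm: "jS a * jS b = jS b * jS a"
  using jS_mul[of a b] jS_mul[of b a] by (simp add: ps_mul_comm)
lemma sc_jS_comm: "iU (sc k) * jS a = jS a * iU (sc k)"
  using jS_comm[of "ps_const k" a] by (simp add: jS_const)
lemma pbw_Nil[simp]: "pbw x [] = 1" by (simp add: pbw_def)
lemma pbw_Cons[simp]: "pbw x (e # w) = x e * pbw x w" by (simp add: pbw_def)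

lemma jS_inj: "jS a = 0 \<Longrightarrow> a = (\<lambda>_. 0)"
  using H_indep[of "{[]}" "\<lambda>_. a" "[]"] by (simp add: iU_one)

lemma F1: "Dact C b (Dact C a X) m - Dact C a (Dact C b X) m = (\<Sum>l\<in>UNIV. C l a b * Dact C l X m)"
proof -
  let ?D = "\<lambda>a X. Dact C a X"
  have two: "jS X * iU (x a * x b) = iU (x a * x b) * jS X + iU (x a) * jS (?D b X) + iU (x b) * jS (?D a X) + jS (?D b (?D a X))" for a b
  proof -
    have "jS X * iU (x a * x b) = (jS X * iU (x a)) * iU (x b)" by (simp add: iU_mul mult.assoc)
    also have "\<dots> = iU (x a) * (jS X * iU (x b)) + jS (?D a X) * iU (x b)"
      by (simp add: cross distrib_right mult.assoc)
    also have "\<dots> = iU (x a * x b) * jS X + iU (x a) * jS (?D b X) + iU (x b) * jS (?D a X) + jS (?D b (?D a X))"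
      by (simp add: cross distrib_left iU_mul mult.assoc add.assoc)
    finally show ?thesis .
  qed
  have "jS X * iU (x a * x b - x b * x a) = iU (x a * x b - x b * x a) * jS X + (jS (?D b (?D a X)) - jS (?D a (?D b X)))"
    by (simp add: iU_diff right_diff_distrib left_diff_distrib two algebra_simps)
  moreover have "jS X * iU (x a * x b - x b * x a) = iU (x a * x b - x b * x a) * jS X + (\<Sum>l\<in>UNIV. iU (sc (C l a b)) * jS (?D l X))"
  proof -
    have "jS X * iU (x a * x b - x b * x a) = (\<Sum>l\<in>UNIV. iU (sc (C l a b)) * (jS X * iU (x l)))"
      by (simp add: bracket iU_sum iU_mul sum_distrib_left mult.assoc[symmetric] sc_jS_comm)
    also have "\<dots> = (\<Sum>l\<in>UNIV. iU (sc (C l a b)) * iU (x l) * jS X) + (\<Sum>l\<in>UNIV. iU (sc (C l a b)) * jS (?D l X))"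
      by (simp add: cross distrib_left sum.distrib mult.assoc)
    also have "(\<Sum>l\<in>UNIV. iU (sc (C l a b)) * iU (x l) * jS X) = iU (x a * x b - x b * x a) * jS X"
      by (simp add: bracket iU_sum iU_mul sum_distrib_right)
    finally show ?thesis .
  qed
  ultimately have "jS (?D b (?D a X)) - jS (?D a (?D b X)) = (\<Sum>l\<in>UNIV. iU (sc (C l a b)) * jS (?D l X))"
    by simp
  hence "jS (\<lambda>m. (?D b (?D a X) m - ?D a (?D b X) m) - (\<Sum>l\<in>UNIV. C l a b * ?D l X m)) = 0"
    by (simp add: jS_diff' jS_sum jS_scal)
  from fun_cong[OF jS_inj[OF this], of m] show ?thesis by simp
qed

lemma KEY_O': "Dact C e (Omat C b a) = (\<lambda>m. \<Sum>d\<in>UNIV. C d a e * Omat C b d m)"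
  by (rule KEY_O[OF anti jac F1])
lemma KEY_I': "Dact C e (Oinv C c a) = (\<lambda>m. \<Sum>d\<in>UNIV. (- C c d e) * Oinv C d a m)"
  using KEY_I[OF anti jac F1, of e c a] by (simp add: sum_negf)

end

context UH begin

definition Phi :: "'h \<Rightarrow> 'u" where
  "Phi h = (THE v. \<exists>W f. finite W \<and> W \<subseteq> {w. sorted w} \<and>
       h = (\<Sum>w\<in>W. iU (pbw x w) * jS (f w)) \<and>
       v = (\<Sum>w\<in>W. sc (eps_S (f w)) * pbw x w))"

lemma black_eq: "black sc x iU jS h u = Phi (h * iU u)"
  unfolding black_def Phi_def ..

definition fe :: "'n list set \<Rightarrow> ('n list \<Rightarrow> ('n,'k) ps) \<Rightarrow> 'n list \<Rightarrow> ('n,'k) ps" where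
  "fe W f w = (if w \<in> W then f w else (\<lambda>_. 0))"

lemma sum_fe: "finite W' \<Longrightarrow> W \<subseteq> W' \<Longrightarrow>
   (\<Sum>w\<in>W'. iU (pbw x w) * jS (fe W f w)) = (\<Sum>w\<in>W. iU (pbw x w) * jS (f w))"
  by (rule sum.mono_neutral_cong_right) (auto simp: fe_def)

lemma sum_fe_eps: "finite W' \<Longrightarrow> W \<subseteq> W' \<Longrightarrow>
   (\<Sum>w\<in>W'. sc (eps_S (fe W f w)) * pbw x w) = (\<Sum>w\<in>W. sc (eps_S (f w)) * pbw x w)"
  by (rule sum.mono_neutral_cong_right) (auto simp: fe_def eps_S_def)

lemma rep_unique:
  assumes W1: "finite W1" "W1 \<subseteq> {w. sorted w}" and W2: "finite W2" "W2 \<subseteq> {w. sorted w}"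
    and eq: "(\<Sum>w\<in>W1. iU (pbw x w) * jS (f1 w)) = (\<Sum>w\<in>W2. iU (pbw x w) * jS (f2 w))"
  shows "(\<Sum>w\<in>W1. sc (eps_S (f1 w)) * pbw x w) = (\<Sum>w\<in>W2. sc (eps_S (f2 w)) * pbw x w)"
proof -
  let ?W = "W1 \<union> W2"
  have fin: "finite ?W" using W1 W2 by simp
  have srt: "?W \<subseteq> {w. sorted w}" using W1 W2 by simp
  have "(\<Sum>w\<in>?W. iU (pbw x w) * jS (\<lambda>m. fe W1 f1 w m - fe W2 f2 w m))
      = (\<Sum>w\<in>?W. iU (pbw x w) * jS (fe W1 f1 w)) - (\<Sum>w\<in>?W. iU (pbw x w) * jS (fe W2 f2 w))"
    by (simp add: jS_diff' right_diff_distrib sum_subtractf)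
  also have "\<dots> = 0" using eq by (simp add: sum_fe[OF fin])
  finally have z: "(\<Sum>w\<in>?W. iU (pbw x w) * jS (\<lambda>m. fe W1 f1 w m - fe W2 f2 w m)) = 0" .
  have same: "fe W1 f1 w = fe W2 f2 w" if "w \<in> ?W" for w
  proof -
    have "(\<lambda>m. fe W1 f1 w m - fe W2 f2 w m) = (\<lambda>_. 0)"
      by (rule H_indep[OF fin srt z that])
    thus ?thesis by (auto simp: fun_eq_iff dest: fun_cong)
  qed
  have "(\<Sum>w\<in>W1. sc (eps_S (f1 w)) * pbw x w) = (\<Sum>w\<in>?W. sc (eps_S (fe W1 f1 w)) * pbw x w)"
    by (simp add: sum_fe_eps[OF fin])
  also have "\<dots> = (\<Sum>w\<in>?W. sc (eps_S (fe W2 f2 w)) * pbw x w)"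
    using same by simp
  also have "\<dots> = (\<Sum>w\<in>W2. sc (eps_S (f2 w)) * pbw x w)"
    by (simp add: sum_fe_eps[OF fin])
  finally show ?thesis .
qed

lemma Phi_eq:
  assumes "finite W" "W \<subseteq> {w. sorted w}" "h = (\<Sum>w\<in>W. iU (pbw x w) * jS (f w))"
  shows "Phi h = (\<Sum>w\<in>W. sc (eps_S (f w)) * pbw x w)"
  unfolding Phi_def
proof (rule the_equality)
  show "\<exists>W' f'. finite W' \<and> W' \<subseteq> {w. sorted w} \<and> h = (\<Sum>w\<in>W'. iU (pbw x w) * jS (f' w)) \<and>
      (\<Sum>w\<in>W. sc (eps_S (f w)) * pbw x w) = (\<Sum>w\<in>W'. sc (eps_S (f' w)) * pbw x w)"
    using assms by blast
next
  fix v assume "\<exists>W' f'. finite W' \<and> W' \<subseteq> {w. sorted w} \<and> h = (\<Sum>w\<in>W'. iU (pbw x w) * jS (f' w)) \<and>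
      v = (\<Sum>w\<in>W'. sc (eps_S (f' w)) * pbw x w)"
  then obtain W' f' where r: "finite W'" "W' \<subseteq> {w. sorted w}" "h = (\<Sum>w\<in>W'. iU (pbw x w) * jS (f' w))"
    and v: "v = (\<Sum>w\<in>W'. sc (eps_S (f' w)) * pbw x w)" by blast
  show "v = (\<Sum>w\<in>W. sc (eps_S (f w)) * pbw x w)"
    unfolding v by (rule rep_unique) (use r assms in auto)
qed

lemma Phi_add: "Phi (h1 + h2) = Phi h1 + Phi h2"
proof -
  obtain W1 f1 where r1: "finite W1" "W1 \<subseteq> {w. sorted w}" "h1 = (\<Sum>w\<in>W1. iU (pbw x w) * jS (f1 w))"
    using H_span by blast
  obtain W2 f2 where r2: "finite W2" "W2 \<subseteq> {w. sorted w}" "h2 = (\<Sum>w\<in>W2. iU (pbw x w) * jS (f2 w))"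
    using H_span by blast
  let ?W = "W1 \<union> W2"
  let ?g = "\<lambda>w m. fe W1 f1 w m + fe W2 f2 w m"
  have fin: "finite ?W" using r1 r2 by simp
  have "h1 + h2 = (\<Sum>w\<in>?W. iU (pbw x w) * jS (?g w))"
    by (simp add: jS_add' distrib_left sum.distrib sum_fe[OF fin] r1 r2)
  hence "Phi (h1 + h2) = (\<Sum>w\<in>?W. sc (eps_S (?g w)) * pbw x w)"
    by (rule Phi_eq[OF fin, rotated]) (use r1 r2 in auto)
  also have "\<dots> = (\<Sum>w\<in>?W. sc (eps_S (fe W1 f1 w)) * pbw x w) + (\<Sum>w\<in>?W. sc (eps_S (fe W2 f2 w)) * pbw x w)"
    by (simp add: eps_S_def sc_add distrib_right sum.distrib)
  also have "\<dots> = Phi h1 + Phi h2"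
    by (simp add: sum_fe_eps[OF fin] Phi_eq[OF r1] Phi_eq[OF r2])
  finally show ?thesis .
qed

lemma Phi_zero[simp]: "Phi 0 = 0"
  using Phi_add[of 0 0] by simp

lemma Phi_sum: "Phi (\<Sum>i\<in>I. h i) = (\<Sum>i\<in>I. Phi (h i))"
  by (induction I rule: infinite_finite_induct) (auto simp: Phi_add)

lemma Phi_Q: "Phi (iU v * jS a) = sc (eps_S a) * v"
proof -
  obtain W c where r: "finite W" "W \<subseteq> {w. sorted w}" "v = (\<Sum>w\<in>W. sc (c w) * pbw x w)"
    using U_span by blast
  have "iU v * jS a = (\<Sum>w\<in>W. iU (pbw x w) * jS (\<lambda>m. c w * a m))"
    by (simp add: r(3) iU_sum sum_distrib_right iU_mul jS_scal sc_comm mult.assoc)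
  hence "Phi (iU v * jS a) = (\<Sum>w\<in>W. sc (eps_S (\<lambda>m. c w * a m)) * pbw x w)"
    by (rule Phi_eq[OF r(1,2)])
  also have "\<dots> = sc (eps_S a) * v"
  proof -
    have "sc (eps_S (\<lambda>m. c w * a m)) * pbw x w = sc (eps_S a) * (sc (c w) * pbw x w)" for w
      by (simp add: eps_S_def mult.commute[of "c w"] sc_mul mult.assoc)
    thus ?thesis by (simp add: r(3) sum_distrib_left)
  qed
  finally show ?thesis .
qed

lemma Phi_iU: "Phi (iU v) = v"
proof -
  have j: "jS (ps_const 1) = 1" by (simp add: jS_const sc_one iU_one)
  have e: "eps_S (ps_const (1::'k) :: ('n,'k) ps) = 1" by (simp add: eps_S_def ps_const_def)
  show ?thesis using Phi_Q[of v "ps_const 1"] by (simp only: j e sc_one mult_1_right mult_1_left)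
qed

lemma Phi_left: "Phi (iU u * h) = u * Phi h"
proof -
  obtain W f where r: "finite W" "W \<subseteq> {w. sorted w}" "h = (\<Sum>w\<in>W. iU (pbw x w) * jS (f w))"
    using H_span by blast
  have "Phi (iU u * h) = (\<Sum>w\<in>W. Phi (iU (u * pbw x w) * jS (f w)))"
    by (simp add: r(3) sum_distrib_left Phi_sum iU_mul mult.assoc)
  also have "\<dots> = (\<Sum>w\<in>W. u * (sc (eps_S (f w)) * pbw x w))"
    by (simp add: Phi_Q sc_comm mult.assoc)
  also have "\<dots> = u * Phi h"
    by (simp add: Phi_eq[OF r] sum_distrib_left)
  finally show ?thesis .
qed

end

context UH begin

definition T :: "('n,'k) ps \<Rightarrow> 'u \<Rightarrow> 'u" where
  "T X f = Phi (jS X * iU f)"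

lemma T_add: "T X (f + g) = T X f + T X g"
  by (simp add: T_def iU_add distrib_left Phi_add)

lemma T_zero[simp]: "T X 0 = 0"
  by (simp add: T_def)

lemma T_scal: "T X (sc k * f) = sc k * T X f"
proof -
  have "jS X * iU (sc k * f) = iU (sc k) * (jS X * iU f)"
    by (simp add: iU_mul mult.assoc[symmetric] sc_jS_comm)
  thus ?thesis by (simp add: T_def Phi_left)
qed

lemma T_one: "T X 1 = sc (eps_S X)"
  using Phi_Q[of 1 X] by (simp add: T_def iU_one)

lemma T_step: "T X (x e * g) = x e * T X g + T (Dact C e X) g"
proof -
  have "jS X * iU (x e * g) = iU (x e) * (jS X * iU g) + jS (Dact C e X) * iU g"
    by (simp add: iU_mul mult.assoc[symmetric] cross distrib_right)
  thus ?thesis by (simp add: T_def Phi_add Phi_left)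
qed

lemma T_lin: "T (\<lambda>m. \<Sum>d\<in>UNIV. k d * Y d m) g = (\<Sum>d\<in>UNIV. sc (k d) * T (Y d) g)"
proof -
  have "jS (\<lambda>m. \<Sum>d\<in>UNIV. k d * Y d m) * iU g = (\<Sum>d\<in>UNIV. iU (sc (k d)) * (jS (Y d) * iU g))"
    by (simp add: jS_sum jS_scal sum_distrib_right mult.assoc)
  thus ?thesis by (simp add: T_def Phi_sum Phi_left)
qed

lemma STEP_O: "T (Omat C b a) (x e * g) = x e * T (Omat C b a) g + (\<Sum>d\<in>UNIV. sc (C d a e) * T (Omat C b d) g)"
  by (simp add: T_step KEY_O' T_lin)

lemma STEP_I: "T (Oinv C c a) (x e * g) = x e * T (Oinv C c a) g + (\<Sum>d\<in>UNIV. sc (- C c d e) * T (Oinv C d a) g)"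
  by (simp only: T_step KEY_I' T_lin)

lemma eps_O: "eps_S (Omat C b a) = (if b = a then 1 else 0)"
  by (simp add: eps_S_def Omat_coef ps_const_def)
lemma eps_I: "eps_S (Oinv C b a) = (if b = a then 1 else 0)"
  by (simp add: eps_S_def Oinv_coef ps_const_def)

lemma sc_delta: "sc (if b = a then 1 else 0) = (if b = a then 1 else 0)"
  by (simp add: sc_one)

lemma T_O_one: "T (Omat C b a) 1 = (if b = a then 1 else 0)"
  by (simp add: T_one eps_O sc_one)
lemma T_I_one: "T (Oinv C b a) 1 = (if b = a then 1 else 0)"
  by (simp add: T_one eps_I sc_one)

lemma U_induct:
  assumes z: "P 0" and a: "\<And>u v. P u \<Longrightarrow> P v \<Longrightarrow> P (u + v)" and s: "\<And>k u. P u \<Longrightarrow> P (sc k * u)"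
    and p: "\<And>w. P (pbw x w)"
  shows "P u"
proof -
  obtain W c where r: "finite W" "u = (\<Sum>w\<in>W. sc (c w) * pbw x w)"
    using U_span by blast
  have "P (\<Sum>w\<in>W. sc (c w) * pbw x w)" using r(1)
    by (induction W rule: finite_induct) (auto intro: z a s p)
  thus ?thesis using r(2) by simp
qed

lemma pbw_induct:
  assumes n: "Q 1" and c: "\<And>e g. Q g \<Longrightarrow> Q (x e * g)"
  shows "Q (pbw x w)"
  by (induction w) (auto intro: n c)

end

context UH begin

lemma delta_l: "(\<Sum>b\<in>UNIV. (if b = (a::'n) then 1 else (0::'u)) * F b) = F a"
proof -
  have "(if b = a then 1 else (0::'u)) * F b = (if b = a then F b else 0)" for b by simp
  thus ?thesis by (simp add: sum.delta)
qed

lemma delta_l': "(\<Sum>b\<in>UNIV. (if (a::'n) = b then 1 else (0::'u)) * F b) = F a"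
proof -
  have "(if a = b then 1 else (0::'u)) * F b = (if a = b then F b else 0)" for b by simp
  thus ?thesis by (simp add: sum.delta')
qed

lemma delta_r: "(\<Sum>b\<in>UNIV. F b * (if b = (a::'n) then 1 else (0::'u))) = F a"
proof -
  have "F b * (if b = a then 1 else (0::'u)) = (if b = a then F b else 0)" for b by simp
  thus ?thesis by (simp add: sum.delta)
qed

lemma br: "x a * x e = (\<Sum>l\<in>UNIV. sc (C l a e) * x l) + x e * x a"
  using bracket[of a e] by (simp add: diff_eq_eq)

lemma sc_left: "u * (sc k * v) = sc k * (u * v)"
proof -
  have "u * (sc k * v) = (u * sc k) * v" by (simp add: mult.assoc)
  also have "u * sc k = sc k * u" by (rule sc_comm[symmetric])
  finally show ?thesis by (simp add: mult.assoc)
qed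

definition P1 :: "'u \<Rightarrow> bool" where
  "P1 f \<longleftrightarrow> (\<forall>a. x a * f = (\<Sum>b\<in>UNIV. T (Omat C b a) f * x b))"

lemma P1_nil: "P1 1"
proof -
  have "x a * 1 = (\<Sum>b\<in>UNIV. T (Omat C b a) 1 * x b)" for a
  proof -
    have "(\<Sum>b\<in>UNIV. T (Omat C b a) 1 * x b) = (\<Sum>b\<in>UNIV. (if b = a then 1 else 0) * x b)"
      by (simp only: T_O_one)
    thus ?thesis by (simp only: delta_l mult_1_right)
  qed
  thus ?thesis unfolding P1_def by (rule allI)
qed

lemma P1_cons: assumes "P1 g" shows "P1 (x e * g)"
proof -
  have IH: "x a * g = (\<Sum>b\<in>UNIV. T (Omat C b a) g * x b)" for a using spec[OF assms[unfolded P1_def]] .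
  have "x a * (x e * g) = (\<Sum>b\<in>UNIV. T (Omat C b a) (x e * g) * x b)" for a
  proof -
    have "x a * (x e * g) = (\<Sum>l\<in>UNIV. sc (C l a e) * (x l * g)) + x e * (x a * g)"
      by (simp add: mult.assoc[symmetric] br[of a e] distrib_right sum_distrib_right)
    also have "\<dots> = (\<Sum>l\<in>UNIV. \<Sum>b\<in>UNIV. sc (C l a e) * T (Omat C b l) g * x b)
                   + (\<Sum>b\<in>UNIV. x e * T (Omat C b a) g * x b)"
      by (simp add: IH sum_distrib_left mult.assoc)
    also have "\<dots> = (\<Sum>b\<in>UNIV. \<Sum>l\<in>UNIV. sc (C l a e) * T (Omat C b l) g * x b)
                   + (\<Sum>b\<in>UNIV. x e * T (Omat C b a) g * x b)"
      by (subst sum.swap) (rule refl)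
    also have "\<dots> = (\<Sum>b\<in>UNIV. T (Omat C b a) (x e * g) * x b)"
      by (simp add: STEP_O distrib_right sum.distrib sum_distrib_right add.commute)
    finally show ?thesis .
  qed
  thus ?thesis unfolding P1_def by (rule allI)
qed

lemma P1_all: "P1 f"
proof (rule U_induct[where P = P1])
  show "P1 0" by (simp add: P1_def)
next
  fix u v assume "P1 u" "P1 v" thus "P1 (u + v)"
    by (simp add: P1_def distrib_left distrib_right T_add sum.distrib)
next
  fix k u assume "P1 u" thus "P1 (sc k * u)"
    by (simp add: P1_def sc_left T_scal sum_distrib_left mult.assoc)
next
  fix w show "P1 (pbw x w)" by (rule pbw_induct[where Q = P1]) (rule P1_nil, erule P1_cons)
qed

lemma C1: "x a * f = (\<Sum>b\<in>UNIV. T (Omat C b a) f * x b)"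
  using spec[OF P1_all[of f, unfolded P1_def]] .

end

context UH begin

definition P2 :: "'u \<Rightarrow> 'u \<Rightarrow> bool" where
  "P2 f g \<longleftrightarrow> (\<forall>a c. T (Omat C c a) (g * f) = (\<Sum>b\<in>UNIV. T (Omat C b a) g * T (Omat C c b) f))"

lemma P2_nil: "P2 f 1"
proof -
  have "T (Omat C c a) (1 * f) = (\<Sum>b\<in>UNIV. T (Omat C b a) 1 * T (Omat C c b) f)" for a c
  proof -
    have "(\<Sum>b\<in>UNIV. T (Omat C b a) 1 * T (Omat C c b) f) = (\<Sum>b\<in>UNIV. (if b = a then 1 else 0) * T (Omat C c b) f)"
      by (simp only: T_O_one)
    thus ?thesis by (simp only: delta_l mult_1_left)
  qed
  thus ?thesis unfolding P2_def by (intro allI)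
qed

lemma P2_cons: assumes "P2 f g" shows "P2 f (x e * g)"
proof -
  have IH: "T (Omat C c a) (g * f) = (\<Sum>b\<in>UNIV. T (Omat C b a) g * T (Omat C c b) f)" for a c
    using spec[OF spec[OF assms[unfolded P2_def]]] .
  have "T (Omat C c a) ((x e * g) * f) = (\<Sum>b\<in>UNIV. T (Omat C b a) (x e * g) * T (Omat C c b) f)" for a c
  proof -
    have "T (Omat C c a) ((x e * g) * f) = x e * T (Omat C c a) (g * f) + (\<Sum>d\<in>UNIV. sc (C d a e) * T (Omat C c d) (g * f))"
      by (simp only: mult.assoc STEP_O)
    also have "\<dots> = (\<Sum>b\<in>UNIV. x e * T (Omat C b a) g * T (Omat C c b) f)
         + (\<Sum>d\<in>UNIV. \<Sum>b\<in>UNIV. sc (C d a e) * T (Omat C b d) g * T (Omat C c b) f)"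
      by (simp only: IH sum_distrib_left mult.assoc)
    also have "\<dots> = (\<Sum>b\<in>UNIV. x e * T (Omat C b a) g * T (Omat C c b) f)
         + (\<Sum>b\<in>UNIV. \<Sum>d\<in>UNIV. sc (C d a e) * T (Omat C b d) g * T (Omat C c b) f)"
      by (subst sum.swap) (rule refl)
    also have "\<dots> = (\<Sum>b\<in>UNIV. T (Omat C b a) (x e * g) * T (Omat C c b) f)"
      by (simp only: STEP_O distrib_right sum.distrib sum_distrib_right)
    finally show ?thesis .
  qed
  thus ?thesis unfolding P2_def by (intro allI)
qed

lemma P2_all: "P2 f g"
proof (rule U_induct[where P = "P2 f"])
  show "P2 f 0" by (simp add: P2_def)
next
  fix u v assume "P2 f u" "P2 f v" thus "P2 f (u + v)"
    by (simp add: P2_def distrib_right T_add sum.distrib)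
next
  fix k u assume "P2 f u" thus "P2 f (sc k * u)"
    by (simp add: P2_def mult.assoc T_scal sum_distrib_left)
next
  fix w show "P2 f (pbw x w)" by (rule pbw_induct[where Q = "P2 f"]) (rule P2_nil, erule P2_cons)
qed

lemma C2: "T (Omat C c a) (g * f) = (\<Sum>b\<in>UNIV. T (Omat C b a) g * T (Omat C c b) f)"
  using spec[OF spec[OF P2_all[of f g, unfolded P2_def]]] .

definition P3 :: "'u \<Rightarrow> 'u \<Rightarrow> bool" where
  "P3 f g \<longleftrightarrow> (\<forall>a c. T (Oinv C c a) (g * f) = (\<Sum>b\<in>UNIV. T (Oinv C c b) g * T (Oinv C b a) f))"

lemma P3_nil: "P3 f 1"
proof -
  have "T (Oinv C c a) (1 * f) = (\<Sum>b\<in>UNIV. T (Oinv C c b) 1 * T (Oinv C b a) f)" for a c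
  proof -
    have "(\<Sum>b\<in>UNIV. T (Oinv C c b) 1 * T (Oinv C b a) f) = (\<Sum>b\<in>UNIV. (if c = b then 1 else 0) * T (Oinv C b a) f)"
      by (simp only: T_I_one)
    thus ?thesis by (simp only: delta_l' mult_1_left)
  qed
  thus ?thesis unfolding P3_def by (intro allI)
qed

lemma P3_cons: assumes "P3 f g" shows "P3 f (x e * g)"
proof -
  have IH: "T (Oinv C c a) (g * f) = (\<Sum>b\<in>UNIV. T (Oinv C c b) g * T (Oinv C b a) f)" for a c
    using spec[OF spec[OF assms[unfolded P3_def]]] .
  have "T (Oinv C c a) ((x e * g) * f) = (\<Sum>b\<in>UNIV. T (Oinv C c b) (x e * g) * T (Oinv C b a) f)" for a c
  proof -
    have "T (Oinv C c a) ((x e * g) * f) = x e * T (Oinv C c a) (g * f) + (\<Sum>d\<in>UNIV. sc (- C c d e) * T (Oinv C d a) (g * f))"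
      by (simp only: mult.assoc STEP_I)
    also have "\<dots> = (\<Sum>b\<in>UNIV. x e * T (Oinv C c b) g * T (Oinv C b a) f)
         + (\<Sum>d\<in>UNIV. \<Sum>b\<in>UNIV. sc (- C c d e) * T (Oinv C d b) g * T (Oinv C b a) f)"
      by (simp only: IH sum_distrib_left mult.assoc)
    also have "\<dots> = (\<Sum>b\<in>UNIV. x e * T (Oinv C c b) g * T (Oinv C b a) f)
         + (\<Sum>b\<in>UNIV. \<Sum>d\<in>UNIV. sc (- C c d e) * T (Oinv C d b) g * T (Oinv C b a) f)"
      by (subst sum.swap) (rule refl)
    also have "\<dots> = (\<Sum>b\<in>UNIV. T (Oinv C c b) (x e * g) * T (Oinv C b a) f)"
      by (simp only: STEP_I distrib_right sum.distrib sum_distrib_right)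
    finally show ?thesis .
  qed
  thus ?thesis unfolding P3_def by (intro allI)
qed

lemma P3_all: "P3 f g"
proof (rule U_induct[where P = "P3 f"])
  show "P3 f 0" by (simp add: P3_def)
next
  fix u v assume "P3 f u" "P3 f v" thus "P3 f (u + v)"
    by (simp add: P3_def distrib_right T_add sum.distrib)
next
  fix k u assume "P3 f u" thus "P3 f (sc k * u)"
    by (simp add: P3_def mult.assoc T_scal sum_distrib_left)
next
  fix w show "P3 f (pbw x w)" by (rule pbw_induct[where Q = "P3 f"]) (rule P3_nil, erule P3_cons)
qed

lemma C3: "T (Oinv C c a) (g * f) = (\<Sum>b\<in>UNIV. T (Oinv C c b) g * T (Oinv C b a) f)"
  using spec[OF spec[OF P3_all[of f g, unfolded P3_def]]] .

definition P4 :: "'u \<Rightarrow> bool" where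
  "P4 f \<longleftrightarrow> (\<forall>a. (\<Sum>b\<in>UNIV. x b * T (Oinv C b a) f) = f * x a)"

lemma P4_nil: "P4 1"
proof -
  have "(\<Sum>b\<in>UNIV. x b * T (Oinv C b a) 1) = 1 * x a" for a
  proof -
    have "(\<Sum>b\<in>UNIV. x b * T (Oinv C b a) 1) = (\<Sum>b\<in>UNIV. x b * (if b = a then 1 else 0))"
      by (simp only: T_I_one)
    thus ?thesis by (simp only: delta_r mult_1_left)
  qed
  thus ?thesis unfolding P4_def by (intro allI)
qed

lemma P4_cons: assumes "P4 g" shows "P4 (x e * g)"
proof -
  have IH: "(\<Sum>b\<in>UNIV. x b * T (Oinv C b a) g) = g * x a" for a
    using spec[OF assms[unfolded P4_def]] .
  have "(\<Sum>b\<in>UNIV. x b * T (Oinv C b a) (x e * g)) = (x e * g) * x a" for a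
  proof -
    have s1: "(\<Sum>b\<in>UNIV. x b * T (Oinv C b a) (x e * g))
        = (\<Sum>b\<in>UNIV. x b * x e * T (Oinv C b a) g) + (\<Sum>b\<in>UNIV. \<Sum>d\<in>UNIV. sc (- C b d e) * (x b * T (Oinv C d a) g))"
      by (simp only: STEP_I distrib_left sum.distrib sum_distrib_left sc_left mult.assoc)
    have s2: "x b * x e * T (Oinv C b a) g = x e * x b * T (Oinv C b a) g + (\<Sum>l\<in>UNIV. sc (C l b e) * (x l * T (Oinv C b a) g))" for b
      by (simp only: br[of b e] distrib_right sum_distrib_right mult.assoc add.commute)
    have s3: "(\<Sum>b\<in>UNIV. \<Sum>l\<in>UNIV. sc (C l b e) * (x l * T (Oinv C b a) g))
        = (\<Sum>l\<in>UNIV. \<Sum>b\<in>UNIV. sc (C l b e) * (x l * T (Oinv C b a) g))"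
      by (rule sum.swap)
    have s4: "(\<Sum>b\<in>UNIV. \<Sum>d\<in>UNIV. sc (- C b d e) * (x b * T (Oinv C d a) g))
        = - (\<Sum>b\<in>UNIV. \<Sum>d\<in>UNIV. sc (C b d e) * (x b * T (Oinv C d a) g))"
      by (simp only: sc_neg mult_minus_left sum_negf)
    have s5: "(\<Sum>b\<in>UNIV. x e * x b * T (Oinv C b a) g) = x e * (g * x a)"
      by (simp only: IH[symmetric] sum_distrib_left mult.assoc)
    have "(\<Sum>b\<in>UNIV. x b * T (Oinv C b a) (x e * g))
        = x e * (g * x a) + (\<Sum>l\<in>UNIV. \<Sum>b\<in>UNIV. sc (C l b e) * (x l * T (Oinv C b a) g))
          - (\<Sum>b\<in>UNIV. \<Sum>d\<in>UNIV. sc (C b d e) * (x b * T (Oinv C d a) g))"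
      by (simp only: s1 s2 sum.distrib s3 s4 s5 diff_conv_add_uminus)
    also have "\<dots> = x e * (g * x a)" by simp
    finally show ?thesis by (simp only: mult.assoc)
  qed
  thus ?thesis unfolding P4_def by (intro allI)
qed

lemma P4_all: "P4 f"
proof (rule U_induct[where P = P4])
  show "P4 0" by (simp add: P4_def)
next
  fix u v assume "P4 u" "P4 v" thus "P4 (u + v)"
    by (simp add: P4_def distrib_left distrib_right T_add sum.distrib)
next
  fix k u assume h: "P4 u"
  have "(\<Sum>b\<in>UNIV. x b * T (Oinv C b a) (sc k * u)) = (sc k * u) * x a" for a
  proof -
    have "(\<Sum>b\<in>UNIV. x b * T (Oinv C b a) (sc k * u)) = sc k * (\<Sum>b\<in>UNIV. x b * T (Oinv C b a) u)"
      by (simp only: T_scal sc_left sum_distrib_left)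
    also have "\<dots> = sc k * (u * x a)" using spec[OF h[unfolded P4_def], of a] by simp
    finally show ?thesis by (simp only: mult.assoc)
  qed
  thus "P4 (sc k * u)" unfolding P4_def by (intro allI)
next
  fix w show "P4 (pbw x w)" by (rule pbw_induct[where Q = P4]) (rule P4_nil, erule P4_cons)
qed

lemma C4: "(\<Sum>b\<in>UNIV. x b * T (Oinv C b a) f) = f * x a"
  using spec[OF P4_all[of f, unfolded P4_def]] .

end

context UH begin

lemma black_T: "black sc x iU jS (jS X) f = T X f"
  by (simp add: black_eq T_def)

lemma R1: "x a * f = (\<Sum>b\<in>UNIV. black sc x iU jS (jS (Omat C b a)) f * x b)"
  by (simp only: black_T C1)

lemma R2: "black sc x iU jS (jS (Omat C c a)) (g * f)
   = (\<Sum>b\<in>UNIV. black sc x iU jS (jS (Omat C b a)) g * black sc x iU jS (jS (Omat C c b)) f)"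
  by (simp only: black_T C2)

lemma R3: "black sc x iU jS (jS (Oinv C c a)) (g * f)
   = (\<Sum>b\<in>UNIV. black sc x iU jS (jS (Oinv C c b)) g * black sc x iU jS (jS (Oinv C b a)) f)"
  by (simp only: black_T C3)

lemma R4: assumes y_def: "\<And>a. y a = (\<Sum>b\<in>UNIV. iU (x b) * jS (Oinv C b a))"
  shows "black sc x iU jS (y a) f = f * x a"
proof -
  have "black sc x iU jS (y a) f = Phi (\<Sum>b\<in>UNIV. iU (x b) * (jS (Oinv C b a) * iU f))"
    by (simp add: black_eq y_def sum_distrib_right mult.assoc)
  also have "\<dots> = (\<Sum>b\<in>UNIV. x b * T (Oinv C b a) f)"
    by (simp add: Phi_sum Phi_left T_def)
  also have "\<dots> = f * x a" by (rule C4)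
  finally show ?thesis .
qed

lemma R5: "black sc x iU jS (iU (x a)) f * g
   = (\<Sum>b\<in>UNIV. black sc x iU jS (jS (Omat C b a)) f * black sc x iU jS (iU (x b)) g)"
proof -
  have bx: "black sc x iU jS (iU (x b)) h = x b * h" for b h
    by (simp add: black_eq Phi_left Phi_iU)
  have "(\<Sum>b\<in>UNIV. black sc x iU jS (jS (Omat C b a)) f * black sc x iU jS (iU (x b)) g)
      = (\<Sum>b\<in>UNIV. T (Omat C b a) f * x b) * g"
    by (simp add: bx black_T sum_distrib_right mult.assoc)
  also have "\<dots> = x a * f * g" by (simp only: C1[symmetric])
  finally show ?thesis by (simp add: bx)
qed

end

theorem theorem2:
  fixes C :: "'n::{finite,linorder} \<Rightarrow> 'n \<Rightarrow> 'n \<Rightarrow> 'k::field_char_0"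
    and sc :: "'k \<Rightarrow> 'u::ring_1" and x :: "'n \<Rightarrow> 'u"
    and iU :: "'u \<Rightarrow> 'h::ring_1" and jS :: "('n, 'k) ps \<Rightarrow> 'h"
    and y :: "'n \<Rightarrow> 'h"
  assumes lie: "lie_structure C"
    and U: "is_Ug C sc x"
    and H: "is_HL C sc x iU jS"
    and y_def: "\<And>a. y a = (\<Sum>b\<in>UNIV. iU (x b) * jS (Oinv C b a))"
  shows "(\<forall>a f. x a * f = (\<Sum>b\<in>UNIV. black sc x iU jS (jS (Omat C b a)) f * x b)) \<and>
    (\<forall>a g f c. black sc x iU jS (jS (Omat C c a)) (g * f)
           = (\<Sum>b\<in>UNIV. black sc x iU jS (jS (Omat C b a)) g * black sc x iU jS (jS (Omat C c b)) f)) \<and>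
    (\<forall>a g f c. black sc x iU jS (jS (Oinv C c a)) (g * f)
           = (\<Sum>b\<in>UNIV. black sc x iU jS (jS (Oinv C c b)) g * black sc x iU jS (jS (Oinv C b a)) f)) \<and>
    (\<forall>a f. black sc x iU jS (y a) f = f * x a) \<and>
    (\<forall>a f g. black sc x iU jS (iU (x a)) f * g
           = (\<Sum>b\<in>UNIV. black sc x iU jS (jS (Omat C b a)) f * black sc x iU jS (iU (x b)) g))"
proof -
  interpret UH C sc x iU jS by (rule UH.intro[OF lie U H])
  show ?thesis
    using R1 R2 R3 R4[OF y_def] R5 by blast
qed

end
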